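(* Let $1\le i<j\le n$ and let $R$ be a positive integer prime to $p$. If $v_{K_R}(s_{R,i,j})<-q\mu_{i,j}+pR$, then $p\nmid v_{K_R}(s_{R,i,j})$.
   Context: Let $p$ be a prime and $K$ a complete discrete valuation field of characteristic $p$ with algebraically closed residue field $k$, normalized valuation $v_K$. Fix $t\in K$ with $v_K(t)=-1$; every $x\in K$ is uniquely $\sum_{l\ge v_K(x)}x_lt^{-l}$ with $x_l\in k$, and $\mathrm{coef}_{K,l}(x)=x_l$. $UT_n(F)$ (resp. $NT_n(F)$) denotes upper triangular $n\times n$ matrices over $F$ with diagonal entries $1$ (resp. $0$); $X^{(p^m)}$ raises every entry of $X$ to the $p^m$-th power. For $X=(x_{i,j})\in UT_n(K)$ put $v_K(X)=\min_{i<j}v_K(x_{i,j})/(j-i)$. Let $n\ge2$ and $L/K$ a totally wildly ramified finite Galois extension with $\mathrm{Gal}(L/K)\cong UT_n(\mathbb F_p)$. Fix $A=(a_{i,j})\in UT_n(K)$ with $\mathrm{coef}_{K,l}(a_{i,j})=0$ for all $i<j$ and $l\in p\mathbb Z\cup\mathbb Z_{\ge0}$, such that $X^{(p)}A=X$ has a solution $\Theta\in UT_n(L)$ whose entries generate $L$ over $K$. Put $m_A=-v_K(A)$, fix an integer $N>\log_p\big(n(p^{n(n-1)/2}+1)m_A+p\big)+\frac{n(n-1)}2$ and $q=p^N$. For a positive integer $R$ prime to $p$ let $K_R=K(T)$ with $T^q+T^{q-1}=t^R$, normalized valuation $v_{K_R}$. Let $t_R\in\overline K$ be the $qR$-th root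 of $t^R(1+T^{-1})^{-1}$ congruent to $t^{1/q}$ modulo $t^{1/q}\mathfrak m_{\overline K}$ (so $t_R\in K_R$, $v_{K_R}(t_R)=-1$). Let $\iota_R:K\to K_R$ be the ring isomorphism $\sum_lx_lt^{-l}\mapsto\sum_lx_l^{1/q}t_R^{-l}$, applied entrywise. Put $A_R=\iota_R(A)$, $W_{R,0}=I$, $W_{R,e}=A_R^{(p^{e-1})}W_{R,e-1}$ ($1\le e\le N$), and $S_R=(W_{R,N}^{(p)})^{-1}AW_{R,N-1}^{(p)}-I=(s_{R,i,j})\in NT_n(K_R)$. For $1\le i<j\le n$ let $m_{i,j}=-v_K(a_{i,j})$ ($=-\infty$ if $a_{i,j}=0$). A partition for $(i,j)$ is a sequence of integers $i=\lambda_0<\lambda_1<\dots<\lambda_s=j$, of length $|\lambda|=s$; $m_\lambda=\sum_{u=0}^{|\lambda|-1}m_{\lambda_u,\lambda_{u+1}}$ and $\mu_{i,j}=\max m_\lambda$ over all partitions for $(i,j)$. *)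

theory Defs
  imports "HOL-Computational_Algebra.Computational_Algebra" "HOL-Library.Extended_Real"
begin

text \<open>Model: K = k((u)) with u = 1/t, i.e. x = sum x_l t^(-l) = sum x_l u^l, so the
 coefficient coef_{K,l}(x) is fls_nth x l and v_K(x) is fls_subdegree x.
 Matrices are functions nat => nat => 'a, only indices 1..n are used.\<close>

type_synonym 'a mx = "nat \<Rightarrow> nat \<Rightarrow> 'a"

definition vfl :: "'a::zero fls \<Rightarrow> ereal" where
  "vfl x = (if x = 0 then \<infinity> else ereal (of_int (fls_subdegree x)))"

definition mmul :: "nat \<Rightarrow> 'a::comm_semiring_1 mx \<Rightarrow> 'a mx \<Rightarrow> 'a mx" where
  "mmul n X Y = (\<lambda>i j. \<Sum>l\<in>{1..n}. X i l * Y l j)"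

definition idm :: "'a::{zero,one} mx" where
  "idm = (\<lambda>i j. if i = j then 1 else 0)"

definition msub :: "'a::ab_group_add mx \<Rightarrow> 'a mx \<Rightarrow> 'a mx" where
  "msub X Y = (\<lambda>i j. X i j - Y i j)"

definition frobm :: "nat \<Rightarrow> 'a::monoid_mult mx \<Rightarrow> 'a mx" where
  "frobm e X = (\<lambda>i j. X i j ^ e)"

definition is_UT :: "nat \<Rightarrow> 'a::{zero,one} mx \<Rightarrow> bool" where
  "is_UT n X \<longleftrightarrow> (\<forall>i\<in>{1..n}. \<forall>j\<in>{1..n}. (i = j \<longrightarrow> X i j = 1) \<and> (j < i \<longrightarrow> X i j = 0))"

definition minv :: "nat \<Rightarrow> 'a::comm_semiring_1 mx \<Rightarrow> 'a mx" where
  "minv n X = (THE Y. (\<forall>i j. (i \<notin> {1..n} \<or> j \<notin> {1..n}) \<longrightarrow> Y i j = 0) \<and>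
                     (\<forall>i\<in>{1..n}. \<forall>j\<in>{1..n}. mmul n X Y i j = idm i j))"

definition mA :: "nat \<Rightarrow> 'a::zero fls mx \<Rightarrow> real" where
  "mA n A = - Min {real_of_int (fls_subdegree (A i j)) / real (j - i) | i j.
                   1 \<le> i \<and> i < j \<and> j \<le> n \<and> A i j \<noteq> 0}"

definition mij :: "'a::zero fls mx \<Rightarrow> nat \<Rightarrow> nat \<Rightarrow> ereal" where
  "mij A i j = - vfl (A i j)"

definition partitions :: "nat \<Rightarrow> nat \<Rightarrow> nat list set" where
  "partitions i j = {lam. lam \<noteq> [] \<and> hd lam = i \<and> last lam = j \<and> sorted_wrt (<) lam}"

definition mlam :: "'a::zero fls mx \<Rightarrow> nat list \<Rightarrow> ereal" where
  "mlam A lam = (\<Sum>u<length lam - 1. mij A (lam ! u) (lam ! (u + 1)))"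

definition mu :: "'a::zero fls mx \<Rightarrow> nat \<Rightarrow> nat \<Rightarrow> ereal" where
  "mu A i j = Max (mlam A ` partitions i j)"

text \<open>K_R is modelled as k((u_R)) with u_R = 1/t_R. Since t_R^(qR) = T^q we get T = t_R^R,
 and t = t_R^q (1 + t_R^(-R))^(1/R), i.e. u = u_R^q (1 + u_R^R)^(-1/R).
 hR is (1 + u^R)^(-1/R), the unique power series with constant term 1 and hR^R (1+u^R) = 1.\<close>
definition hR :: "nat \<Rightarrow> 'a::field fps" where
  "hR R = (THE h. fps_nth h 0 = 1 \<and> h ^ R * (1 + fps_X ^ R) = 1)"

definition gR :: "nat \<Rightarrow> nat \<Rightarrow> 'a::field fps" where
  "gR q R = fps_X ^ q * hR R"

definition embR :: "nat \<Rightarrow> nat \<Rightarrow> 'a::field fls \<Rightarrow> 'a fls" where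
  "embR q R x = fls_compose_fps x (gR q R)"

definition iotaR :: "nat \<Rightarrow> 'a::field fls \<Rightarrow> 'a fls" where
  "iotaR q x = Abs_fls (\<lambda>l. THE y. y ^ q = fls_nth x l)"

definition WR :: "nat \<Rightarrow> nat \<Rightarrow> nat \<Rightarrow> 'a::field fls mx \<Rightarrow> nat \<Rightarrow> 'a fls mx" where
  "WR p n q A e = rec_nat idm
     (\<lambda>e' W. mmul n (frobm (p ^ e') (\<lambda>i j. iotaR q (A i j))) W) e"

definition SR :: "nat \<Rightarrow> nat \<Rightarrow> nat \<Rightarrow> nat \<Rightarrow> nat \<Rightarrow> 'a::field fls mx \<Rightarrow> 'a fls mx" where
  "SR p n N R q A = msub
     (mmul n (minv n (frobm p (WR p n q A N)))
        (mmul n (\<lambda>i j. embR q R (A i j)) (frobm p (WR p n q A (N - 1))))) idm"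

text \<open>Galois group of L over K, where K is embedded in L via phi\<close>
definition galK :: "('k \<Rightarrow> 'l::field) \<Rightarrow> ('l \<Rightarrow> 'l) set" where
  "galK phi = {\<sigma>. bij \<sigma> \<and> (\<forall>x y. \<sigma> (x + y) = \<sigma> x + \<sigma> y) \<and> (\<forall>x y. \<sigma> (x * y) = \<sigma> x * \<sigma> y)
                 \<and> (\<forall>c. \<sigma> (phi c) = phi c)}"

definition is_field_hom :: "('a::field \<Rightarrow> 'b::field) \<Rightarrow> bool" where
  "is_field_hom f \<longleftrightarrow> f 1 = 1 \<and> (\<forall>x y. f (x + y) = f x + f y) \<and> (\<forall>x y. f (x * y) = f x * f y)"

definition is_subfield :: "'a::field set \<Rightarrow> bool" where
  "is_subfield F \<longleftrightarrow> 0 \<in> F \<and> 1 \<in> F \<and> (\<forall>x\<in>F. \<forall>y\<in>F. x + y \<in> F \<and> x * y \<in> F \<and> - x \<in> F)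
      \<and> (\<forall>x\<in>F. inverse x \<in> F)"

text \<open>UT_n(F_p): F_p represented by {0..<p}, matrices zero outside indices 1..n\<close>
definition UTFp :: "nat \<Rightarrow> nat \<Rightarrow> nat mx set" where
  "UTFp n p = {M. (\<forall>i j. M i j < p) \<and> (\<forall>i j. (i \<notin> {1..n} \<or> j \<notin> {1..n}) \<longrightarrow> M i j = 0)
     \<and> (\<forall>i\<in>{1..n}. M i i = 1) \<and> (\<forall>i\<in>{1..n}. \<forall>j\<in>{1..n}. j < i \<longrightarrow> M i j = 0)}"

definition UTFp_mult :: "nat \<Rightarrow> nat \<Rightarrow> nat mx \<Rightarrow> nat mx \<Rightarrow> nat mx" where
  "UTFp_mult n p M M' = (\<lambda>i j. if i \<in> {1..n} \<and> j \<in> {1..n}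
      then (\<Sum>l\<in>{1..n}. M i l * M' l j) mod p else 0)"

text \<open>L/K is a finite Galois extension with group isomorphic to UT_n(F_p)
 (Artin: Gal finite with fixed field K means L/K finite Galois with that group)\<close>
definition galois_UT :: "nat \<Rightarrow> nat \<Rightarrow> ('k \<Rightarrow> 'l::field) \<Rightarrow> bool" where
  "galois_UT n p phi \<longleftrightarrow>
     {x. \<forall>\<sigma>\<in>galK phi. \<sigma> x = x} = range phi \<and>
     (\<exists>\<psi>. bij_betw \<psi> (galK phi) (UTFp n p) \<and>
        (\<forall>\<sigma>\<in>galK phi. \<forall>\<tau>\<in>galK phi. \<psi> (\<sigma> \<circ> \<tau>) = UTFp_mult n p (\<psi> \<sigma>) (\<psi> \<tau>)))"

end

theory Submission
  imports Defs
begin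

lemma CHAR_eq_p:
  assumes p: "prime p" and chark: "of_nat p = (0::'k::field)"
  shows "CHAR('k) = p"
proof -
  have "CHAR('k) dvd p" using chark by (simp add: of_nat_eq_0_iff_char_dvd)
  moreover have "CHAR('k) \<noteq> 1"
    by (metis of_nat_1 of_nat_CHAR one_neq_zero)
  ultimately show ?thesis using p prime_nat_iff by auto
qed

lemma frob_inj:
  fixes y z :: "'k::field"
  assumes "prime CHAR('k)" "y ^ (CHAR('k) ^ e) = z ^ (CHAR('k) ^ e)"
  shows "y = z"
proof -
  have "((y - z) + z) ^ (CHAR('k) ^ e) = (y - z) ^ (CHAR('k) ^ e) + z ^ (CHAR('k) ^ e)"
    by (rule freshmans_dream') (use assms in auto)
  then have "(y - z) ^ (CHAR('k) ^ e) = 0" using assms by simp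
  then show ?thesis by simp
qed


lemma root_ex:
  fixes x :: "'k::field"
  assumes alg: "\<forall>f::'k poly. degree f > 0 \<longrightarrow> (\<exists>x. poly f x = 0)" and q: "q > 0"
  shows "\<exists>y. y ^ q = x"
proof -
  let ?f = "[:-x:] + monom 1 q"
  have "degree ?f = q"
    using q by (subst degree_add_eq_right) (auto simp: degree_monom_eq)
  then have "0 < degree ?f" using q by simp
  then obtain y where "poly ?f y = 0" using alg by blast
  then have "y ^ q = x" by (simp add: poly_monom)
  then show ?thesis by blast
qed

lemma root_the:
  fixes x :: "'k::field"
  assumes alg: "\<forall>f::'k poly. degree f > 0 \<longrightarrow> (\<exists>x. poly f x = 0)"
    and pc: "prime CHAR('k)"
  shows "(THE y. y ^ (CHAR('k) ^ e) = x) ^ (CHAR('k) ^ e) = x"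
proof -
  have q: "CHAR('k) ^ e > 0" using pc prime_gt_0_nat by auto
  obtain y where y: "y ^ (CHAR('k) ^ e) = x" using root_ex[OF alg q] by blast
  have "(THE y. y ^ (CHAR('k) ^ e) = x) = y"
    by (rule the_equality) (use y frob_inj[OF pc] in auto)
  then show ?thesis using y by simp
qed

lemma root_the_0:
  assumes pc: "prime CHAR('k::field)"
  shows "(THE y::'k. y ^ (CHAR('k) ^ e) = 0) = 0"
proof -
  have q: "CHAR('k) ^ e > 0" using pc prime_gt_0_nat by auto
  show ?thesis by (rule the_equality) (use q in auto)
qed

lemma iotaR_nth:
  fixes x :: "'k::field fls"
  assumes pc: "prime CHAR('k)"
  shows "fls_nth (iotaR (CHAR('k) ^ e) x) l = (THE y. y ^ (CHAR('k) ^ e) = fls_nth x l)"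
proof -
  let ?g = "\<lambda>l. (THE y. y ^ (CHAR('k) ^ e) = fls_nth x l)"
  have ev: "\<forall>\<^sub>\<infinity> n::nat. ?g (- int n) = 0"
  proof -
    have "\<forall>n>nat (- fls_subdegree x). ?g (- int n) = 0"
      using root_the_0[OF pc] by auto
    then show ?thesis unfolding MOST_nat by blast
  qed
  show ?thesis unfolding iotaR_def using nth_Abs_fls[OF ev] by simp
qed


lemma fls_X_intpow_nth: "fls_nth (fls_X_intpow m :: 'a::{semiring_1} fls) k = (if k = m then 1 else 0)"
  by simp

lemma fls_const_X_nth:
  "fls_nth (fls_const c * fls_X_intpow m :: 'a::{comm_ring_1} fls) k = (if k = m then c else 0)"
  by simp

lemma fls_fin_repr:
  fixes f :: "'a::comm_ring_1 fls"
  assumes "finite S" "\<forall>m. m \<notin> S \<longrightarrow> fls_nth f m = 0"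
  shows "f = (\<Sum>m\<in>S. fls_const (fls_nth f m) * fls_X_intpow m)"
proof (rule fls_eqI)
  fix k
  have "fls_nth (\<Sum>m\<in>S. fls_const (fls_nth f m) * fls_X_intpow m) k
      = (\<Sum>m\<in>S. if k = m then fls_nth f m else 0)"
    by (simp add: fls_nth_sum fls_X_intpow_nth if_distrib cong: if_cong del: fls_shift_nth)
  also have "\<dots> = fls_nth f k"
    using assms by (auto simp: sum.delta')
  finally show "fls_nth f k = fls_nth (\<Sum>m\<in>S. fls_const (fls_nth f m) * fls_X_intpow m) k" by simp
qed

lemma frob_fin:
  fixes f :: "'k::field fls"
  assumes pc: "prime CHAR('k)" and "finite S" "\<forall>m. m \<notin> S \<longrightarrow> fls_nth f m = 0"
  shows "f ^ (CHAR('k) ^ e) = (\<Sum>m\<in>S. fls_const (fls_nth f m ^ (CHAR('k) ^ e)) * fls_X_intpow (int (CHAR('k) ^ e) * m))"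
proof -
  have pc': "prime CHAR('k fls)" using pc by simp
  have "f ^ (CHAR('k) ^ e) = (\<Sum>m\<in>S. fls_const (fls_nth f m) * fls_X_intpow m) ^ (CHAR('k fls) ^ e)"
    using fls_fin_repr[OF assms(2,3)] by simp
  also have "\<dots> = (\<Sum>m\<in>S. (fls_const (fls_nth f m) * fls_X_intpow m) ^ (CHAR('k fls) ^ e))"
    by (rule freshmans_dream_sum'[OF pc']) simp
  also have "\<dots> = (\<Sum>m\<in>S. fls_const (fls_nth f m ^ (CHAR('k) ^ e)) * fls_X_intpow (int (CHAR('k) ^ e) * m))"
    by (simp add: power_mult_distrib fls_const_power fls_X_intpow_power)
  finally show ?thesis .
qed

definition pz :: "nat \<Rightarrow> 'a::zero fls \<Rightarrow> bool" where
  "pz p f \<longleftrightarrow> (\<forall>m. \<not> int p dvd m \<longrightarrow> fls_nth f m = 0)"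

lemma frob_fin_pz:
  fixes f :: "'k::field fls"
  assumes pc: "prime CHAR('k)" and "finite S" "\<forall>m. m \<notin> S \<longrightarrow> fls_nth f m = 0" and e: "e \<ge> 1"
  shows "pz CHAR('k) (f ^ (CHAR('k) ^ e))"
  unfolding pz_def
proof (intro allI impI)
  fix k :: int assume k: "\<not> int CHAR('k) dvd k"
  have "\<And>m. k \<noteq> int (CHAR('k) ^ e) * m"
  proof
    fix m assume "k = int (CHAR('k) ^ e) * m"
    then have "int CHAR('k) dvd k" using e
      by (metis dvd_mult2 dvd_power of_nat_power dvd_refl le_antisym not_one_le_zero order.trans
          linorder_not_le power_0 le_numeral_extra(4) int_dvd_int_iff le_add1 Suc_le_eq
          not_less_iff_gr_or_eq dvd_triv_left power_Suc)
    with k show False by simp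
  qed
  then show "fls_nth (f ^ CHAR('k) ^ e) k = 0"
    by (subst frob_fin[OF assms(1-3)]) (simp add: fls_nth_sum fls_X_intpow_nth del: fls_shift_nth)
qed


lemma mmul_assoc: "mmul n (mmul n X Y) Z i j = mmul n X (mmul n Y Z) i j"
  unfolding mmul_def
  by (simp add: sum_distrib_left sum_distrib_right mult.assoc) (rule sum.swap)

lemma mmul_idm_left: "i \<in> {1..n} \<Longrightarrow> mmul n idm X i j = X i j"
proof -
  assume i: "i \<in> {1..n}"
  have eq: "(\<lambda>l. (if i = l then 1 else 0) * X l j) = (\<lambda>l. if i = l then X l j else 0)" by auto
  show ?thesis unfolding mmul_def idm_def eq using i by simp
qed

lemma mmul_idm_right: "j \<in> {1..n} \<Longrightarrow> mmul n X idm i j = X i j"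
proof -
  assume j: "j \<in> {1..n}"
  have eq: "(\<lambda>l. X i l * (if l = j then 1 else 0)) = (\<lambda>l. if l = j then X i l else 0)" by auto
  show ?thesis unfolding mmul_def idm_def eq using j by simp
qed

definition eqn :: "nat \<Rightarrow> 'a mx \<Rightarrow> 'a mx \<Rightarrow> bool" where
  "eqn n X Y \<longleftrightarrow> (\<forall>i\<in>{1..n}. \<forall>j\<in>{1..n}. X i j = Y i j)"

lemma mmul_cong:
  assumes "eqn n X X'" "eqn n Y Y'" "i \<in> {1..n}" "j \<in> {1..n}"
  shows "mmul n X Y i j = mmul n X' Y' i j"
  using assms unfolding mmul_def eqn_def by (intro sum.cong) auto

lemma frobm_mmul:
  fixes X Y :: "'k::field fls mx"
  assumes pc: "prime CHAR('k)"
  shows "frobm (CHAR('k) ^ e) (mmul n X Y) = mmul n (frobm (CHAR('k) ^ e) X) (frobm (CHAR('k) ^ e) Y)"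
proof -
  have pc': "prime CHAR('k fls)" using pc by simp
  show ?thesis
    unfolding frobm_def mmul_def
    by (intro ext, subst freshmans_dream_sum'[OF pc', of _ e]) (simp_all add: power_mult_distrib)
qed

definition ut :: "nat \<Rightarrow> 'a::{zero,one} mx \<Rightarrow> bool" where
  "ut n X \<longleftrightarrow> (\<forall>i\<in>{1..n}. \<forall>j\<in>{1..n}. (j < i \<longrightarrow> X i j = 0) \<and> X i i = 1)"

function rinv :: "nat \<Rightarrow> 'a::comm_ring_1 mx \<Rightarrow> nat \<Rightarrow> nat \<Rightarrow> 'a" where
  "rinv n X i j = (if i < 1 \<or> i > n \<or> j < 1 \<or> j > n then 0
     else idm i j - (\<Sum>l\<in>{i<..n}. X i l * rinv n X l j))"
  by auto
termination by (relation "measure (\<lambda>(n,X,i,j). n - i)") auto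

declare rinv.simps[simp del]

lemma rinv_in: "i \<in> {1..n} \<Longrightarrow> j \<in> {1..n} \<Longrightarrow>
  rinv n X i j = idm i j - (\<Sum>l\<in>{i<..n}. X i l * rinv n X l j)"
  by (rule trans[OF rinv.simps]) auto

lemma rinv_out: "i \<notin> {1..n} \<or> j \<notin> {1..n} \<Longrightarrow> rinv n X i j = 0"
  by (subst rinv.simps) auto

lemma sum_split_diag:
  fixes f :: "nat \<Rightarrow> 'a::comm_monoid_add"
  assumes "i \<in> {1..n}" "\<And>l. l \<in> {1..n} \<Longrightarrow> l < i \<Longrightarrow> f l = 0"
  shows "(\<Sum>l\<in>{1..n}. f l) = f i + (\<Sum>l\<in>{i<..n}. f l)"
proof -
  have e1: "{1..n} = {1..<i} \<union> {i..n}" using assms(1) by auto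
  have e2: "{i..n} = insert i {i<..n}" using assms(1) by auto
  have "(\<Sum>l\<in>{1..n}. f l) = (\<Sum>l\<in>{1..<i}. f l) + (\<Sum>l\<in>{i..n}. f l)"
    unfolding e1 by (rule sum.union_disjoint) auto
  also have "(\<Sum>l\<in>{i..n}. f l) = f i + (\<Sum>l\<in>{i<..n}. f l)"
    unfolding e2 by (rule sum.insert) auto
  finally have "(\<Sum>l\<in>{1..n}. f l) = (\<Sum>l\<in>{1..<i}. f l) + (f i + (\<Sum>l\<in>{i<..n}. f l))" .
  also have "(\<Sum>l\<in>{1..<i}. f l) = 0" using assms by (intro sum.neutral) auto
  finally show ?thesis by simp
qed

lemma rinv_right:
  fixes X :: "'a::comm_ring_1 mx"
  assumes "ut n X" "i \<in> {1..n}" "j \<in> {1..n}"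
  shows "mmul n X (rinv n X) i j = idm i j"
proof -
  have "mmul n X (rinv n X) i j = X i i * rinv n X i j + (\<Sum>l\<in>{i<..n}. X i l * rinv n X l j)"
    unfolding mmul_def using assms by (intro sum_split_diag) (auto simp: ut_def)
  also have "\<dots> = idm i j"
    using assms by (simp add: rinv_in ut_def)
  finally show ?thesis .
qed

lemma rinv_unique:
  fixes X Y :: "'a::comm_ring_1 mx"
  assumes X: "ut n X" and Y0: "\<forall>i j. (i \<notin> {1..n} \<or> j \<notin> {1..n}) \<longrightarrow> Y i j = 0"
    and Y: "\<forall>i\<in>{1..n}. \<forall>j\<in>{1..n}. mmul n X Y i j = idm i j"
  shows "Y i j = rinv n X i j"
proof (induction i rule: measure_induct_rule[where f="\<lambda>i. n - i"])
  case (less i)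
  show ?case
  proof (cases "i \<in> {1..n} \<and> j \<in> {1..n}")
    case True
    have "mmul n X Y i j = X i i * Y i j + (\<Sum>l\<in>{i<..n}. X i l * Y l j)"
      unfolding mmul_def using True X by (intro sum_split_diag) (auto simp: ut_def)
    then have "Y i j = idm i j - (\<Sum>l\<in>{i<..n}. X i l * Y l j)"
      using True X Y by (auto simp: ut_def algebra_simps)
    also have "\<dots> = idm i j - (\<Sum>l\<in>{i<..n}. X i l * rinv n X l j)"
      using less by (intro arg_cong2[where f="(-)"] sum.cong refl) auto
    also have "\<dots> = rinv n X i j" using True by (simp add: rinv_in)
    finally show ?thesis .
  next
    case False
    then show ?thesis using Y0 rinv_out[of i n j X] by auto
  qed
qed

lemma minv_rinv:
  fixes X :: "'a::comm_ring_1 mx"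
  assumes X: "ut n X"
  shows "minv n X = rinv n X"
proof -
  have "(THE Y. (\<forall>i j. (i \<notin> {1..n} \<or> j \<notin> {1..n}) \<longrightarrow> Y i j = 0) \<and>
                     (\<forall>i\<in>{1..n}. \<forall>j\<in>{1..n}. mmul n X Y i j = idm i j)) = rinv n X"
  proof (rule the_equality)
    show "(\<forall>i j. (i \<notin> {1..n} \<or> j \<notin> {1..n}) \<longrightarrow> rinv n X i j = 0) \<and>
                     (\<forall>i\<in>{1..n}. \<forall>j\<in>{1..n}. mmul n X (rinv n X) i j = idm i j)"
    proof
      show "\<forall>i j. (i \<notin> {1..n} \<or> j \<notin> {1..n}) \<longrightarrow> rinv n X i j = 0"
        using rinv_out by blast
      show "\<forall>i\<in>{1..n}. \<forall>j\<in>{1..n}. mmul n X (rinv n X) i j = idm i j"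
        using rinv_right[OF X] by blast
    qed
  next
    fix Y assume "(\<forall>i j. (i \<notin> {1..n} \<or> j \<notin> {1..n}) \<longrightarrow> Y i j = 0) \<and>
                     (\<forall>i\<in>{1..n}. \<forall>j\<in>{1..n}. mmul n X Y i j = idm i j)"
    then show "Y = rinv n X" using rinv_unique[OF X] by blast
  qed
  then show ?thesis unfolding minv_def .
qed

lemma rinv_ut:
  fixes X :: "'a::comm_ring_1 mx"
  assumes X: "ut n X"
  shows "ut n (rinv n X)"
proof -
  have "\<forall>j\<in>{1..n}. (j < i \<longrightarrow> rinv n X i j = 0) \<and> (j = i \<longrightarrow> rinv n X i j = 1)" if "i \<in> {1..n}" for i
    using that
  proof (induction i rule: measure_induct_rule[where f="\<lambda>i. n - i"])
    case (less i)
    show ?case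
    proof (intro ballI conjI impI)
      fix j assume j: "j \<in> {1..n}" "j < i"
      have "(\<Sum>l\<in>{i<..n}. X i l * rinv n X l j) = 0"
        using less j by (intro sum.neutral) auto
      then show "rinv n X i j = 0" using less.prems j by (simp add: rinv_in idm_def)
    next
      fix j assume j: "j \<in> {1..n}" "j = i"
      have "(\<Sum>l\<in>{i<..n}. X i l * rinv n X l j) = 0"
        using less j by (intro sum.neutral) auto
      then show "rinv n X i j = 1" using less.prems j by (simp add: rinv_in idm_def)
    qed
  qed
  then show ?thesis unfolding ut_def by auto
qed

lemma rinv_left:
  fixes X :: "'a::comm_ring_1 mx"
  assumes X: "ut n X" and ij: "i \<in> {1..n}" "j \<in> {1..n}"
  shows "mmul n (rinv n X) X i j = idm i j"
proof -
  let ?P = "rinv n X" let ?Q = "rinv n ?P"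
  have P: "ut n ?P" by (rule rinv_ut[OF X])
  have XQ: "eqn n X ?Q"
    unfolding eqn_def
  proof (intro ballI)
    fix a b assume ab: "a \<in> {1..n}" "b \<in> {1..n}"
    have "X a b = mmul n X idm a b" using ab by (simp add: mmul_idm_right)
    also have "\<dots> = mmul n X (mmul n ?P ?Q) a b"
      using ab rinv_right[OF P] by (intro mmul_cong) (auto simp: eqn_def)
    also have "\<dots> = mmul n (mmul n X ?P) ?Q a b" by (simp add: mmul_assoc)
    also have "\<dots> = mmul n idm ?Q a b"
      using ab rinv_right[OF X] by (intro mmul_cong) (auto simp: eqn_def)
    also have "\<dots> = ?Q a b" using ab by (simp add: mmul_idm_left)
    finally show "X a b = ?Q a b" .
  qed
  have "mmul n ?P X i j = mmul n ?P ?Q i j"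
    using XQ ij by (intro mmul_cong) (auto simp: eqn_def)
  also have "\<dots> = idm i j" using rinv_right[OF P ij] .
  finally show ?thesis .
qed


lemma mij_not_inf: "mij A i j \<noteq> \<infinity>"
  unfolding mij_def vfl_def by auto

lemma sum_ereal_not_inf:
  fixes f :: "'b \<Rightarrow> ereal"
  shows "(\<And>x. x \<in> S \<Longrightarrow> f x \<noteq> \<infinity>) \<Longrightarrow> sum f S \<noteq> \<infinity>"
proof (induction S rule: infinite_finite_induct)
  case (insert x F)
  then have "f x \<noteq> \<infinity>" "sum f F \<noteq> \<infinity>" by auto
  then show ?case using insert by simp
qed auto

lemma mlam_not_inf: "mlam A lam \<noteq> \<infinity>"
  unfolding mlam_def by (rule sum_ereal_not_inf) (rule mij_not_inf)

lemma mlam_single [simp]: "mlam A [a] = 0"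
  unfolding mlam_def by simp

lemma mlam_Cons2 [simp]: "mlam A (a # b # rest) = mij A a b + mlam A (b # rest)"
  unfolding mlam_def by (simp del: sum.lessThan_Suc add: sum.lessThan_Suc_shift)

lemma mlam_append:
  assumes "lam \<noteq> []" "nu \<noteq> []" "last lam = hd nu"
  shows "mlam A (lam @ tl nu) = mlam A lam + mlam A nu"
  using assms
proof (induction lam rule: induct_list012)
  case (2 a)
  then have "[a] @ tl nu = nu" by (cases nu) auto
  then show ?case by simp
next
  case (3 a b rest)
  have "mlam A ((a # b # rest) @ tl nu) = mij A a b + mlam A ((b # rest) @ tl nu)"
    by simp
  also have "\<dots> = mij A a b + (mlam A (b # rest) + mlam A nu)"
    using 3 by simp
  finally show ?case by (simp add: add.assoc)
qed auto

lemma sorted_hd_last: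
  assumes "sorted_wrt (<) xs" "x \<in> set (xs :: nat list)"
  shows "hd xs \<le> x \<and> x \<le> last xs"
  using assms
proof (induction xs)
  case (Cons a ys)
  show ?case
  proof (cases "ys = []")
    case True then show ?thesis using Cons by auto
  next
    case False
    then have ll: "last ys \<in> set ys" by simp
    then have al: "a < last ys" using Cons.prems(1) by simp
    from Cons.prems(2) have "x = a \<or> x \<in> set ys" by simp
    then show ?thesis
    proof
      assume "x = a" then show ?thesis using al False by simp
    next
      assume "x \<in> set ys" then show ?thesis using Cons.IH Cons.prems(1) False al by fastforce
    qed
  qed
qed auto

lemma partitions_sub: "lam \<in> partitions i j \<Longrightarrow> set lam \<subseteq> {i..j}"
  unfolding partitions_def using sorted_hd_last by fastforce

lemma partitions_finite: "finite (partitions i j)"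
proof -
  have "partitions i j \<subseteq> {xs. set xs \<subseteq> {i..j} \<and> length xs \<le> card {i..j}}"
  proof
    fix xs assume xs: "xs \<in> partitions i j"
    then have "distinct xs" unfolding partitions_def
      using strict_sorted_iff by blast
    then have "length xs = card (set xs)" by (simp add: distinct_card)
    also have "\<dots> \<le> card {i..j}" using partitions_sub[OF xs] by (intro card_mono) auto
    finally show "xs \<in> {xs. set xs \<subseteq> {i..j} \<and> length xs \<le> card {i..j}}"
      using partitions_sub[OF xs] by auto
  qed
  then show ?thesis by (rule finite_subset) (intro finite_lists_length_le finite_atLeastAtMost)
qed

lemma partitions_ii: "partitions i i = {[i]}"
proof -
  have "lam = [i]" if "lam \<in> partitions i i" for lam
  proof -
    from that have l: "lam \<noteq> []" "hd lam = i" "last lam = i" "sorted_wrt (<) lam"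
      unfolding partitions_def by auto
    then obtain rest where lam: "lam = i # rest" by (cases lam) auto
    show ?thesis
    proof (cases "rest = []")
      case False
      then have "last rest \<in> set rest" by simp
      then show ?thesis using l lam False by auto
    qed (use lam in auto)
  qed
  then show ?thesis unfolding partitions_def by auto
qed

lemma mu_ii [simp]: "mu A i i = 0"
  unfolding mu_def partitions_ii by simp

lemma partitions_ne: "i \<le> j \<Longrightarrow> partitions i j \<noteq> {}"
proof -
  assume "i \<le> j"
  then show ?thesis
  proof (cases "i = j")
    case False
    then have "[i, j] \<in> partitions i j" using \<open>i \<le> j\<close> unfolding partitions_def by auto
    then show ?thesis by auto
  qed (simp add: partitions_ii)
qed

lemma mu_not_inf: "i \<le> j \<Longrightarrow> mu A i j \<noteq> \<infinity>"
proof -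
  assume "i \<le> j"
  then have "mu A i j \<in> mlam A ` partitions i j"
    unfolding mu_def using partitions_finite partitions_ne by (intro Max_in) auto
  then obtain lam where "mu A i j = mlam A lam" by auto
  then show ?thesis using mlam_not_inf by metis
qed

lemma mu_ge: "lam \<in> partitions i j \<Longrightarrow> mlam A lam \<le> mu A i j"
  unfolding mu_def using partitions_finite by (intro Max_ge) auto

lemma mij_le_mu: "i < j \<Longrightarrow> mij A i j \<le> mu A i j"
proof -
  assume "i < j"
  then have "[i, j] \<in> partitions i j" unfolding partitions_def by auto
  from mu_ge[OF this, of A] show ?thesis by simp
qed

lemma partitions_app:
  assumes "lam \<in> partitions i k" "nu \<in> partitions k j"
  shows "lam @ tl nu \<in> partitions i j"
proof -
  from assms have l: "lam \<noteq> []" "hd lam = i" "last lam = k" "sorted_wrt (<) lam"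
    and m: "nu \<noteq> []" "hd nu = k" "last nu = j" "sorted_wrt (<) nu"
    unfolding partitions_def by auto
  obtain rest where nu: "nu = k # rest" using m by (cases nu) auto
  have "sorted_wrt (<) (lam @ rest)"
    unfolding sorted_wrt_append using l m nu sorted_hd_last[OF l(4)] by fastforce
  moreover have "last (lam @ rest) = j"
    using l m nu by (cases "rest = []") auto
  ultimately show ?thesis using l nu unfolding partitions_def by auto
qed

lemma mu_super:
  assumes "i \<le> k" "k \<le> j"
  shows "mu A i k + mu A k j \<le> mu A i j"
proof -
  have "mu A i k \<in> mlam A ` partitions i k"
    unfolding mu_def using partitions_finite partitions_ne assms by (intro Max_in) auto
  then obtain lam where lam: "lam \<in> partitions i k" "mu A i k = mlam A lam" by auto
  have "mu A k j \<in> mlam A ` partitions k j"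
    unfolding mu_def using partitions_finite partitions_ne assms by (intro Max_in) auto
  then obtain mu' where mu': "mu' \<in> partitions k j" "mu A k j = mlam A mu'" by auto
  have "mlam A (lam @ tl mu') = mlam A lam + mlam A mu'"
    using lam mu' unfolding partitions_def by (intro mlam_append) auto
  moreover have "mlam A (lam @ tl mu') \<le> mu A i j"
    by (rule mu_ge) (rule partitions_app[OF lam(1) mu'(1)])
  ultimately show ?thesis using lam mu' by simp
qed


definition lbz :: "'a::zero fls \<Rightarrow> ereal \<Rightarrow> bool" where
  "lbz f c \<longleftrightarrow> (\<forall>m::int. ereal (real_of_int m) < c \<longrightarrow> fls_nth f m = 0)"

definition gz :: "nat \<Rightarrow> 'a::zero fls \<Rightarrow> ereal \<Rightarrow> bool" where
  "gz p f c \<longleftrightarrow> (\<forall>m::int. int p dvd m \<and> ereal (real_of_int m) < c \<longrightarrow> fls_nth f m = 0)"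

lemma lbz_iff: "lbz f c \<longleftrightarrow> (f = 0 \<or> c \<le> ereal (real_of_int (fls_subdegree f)))"
proof
  assume l: "lbz f c"
  show "f = 0 \<or> c \<le> ereal (real_of_int (fls_subdegree f))"
  proof (rule ccontr)
    assume "\<not> ?thesis"
    then have "f \<noteq> 0" "ereal (real_of_int (fls_subdegree f)) < c" by auto
    then show False using l unfolding lbz_def by auto
  qed
next
  assume "f = 0 \<or> c \<le> ereal (real_of_int (fls_subdegree f))"
  then show "lbz f c"
  proof
    assume c: "c \<le> ereal (real_of_int (fls_subdegree f))"
    show "lbz f c" unfolding lbz_def
    proof (intro allI impI)
      fix m :: int assume "ereal (real_of_int m) < c"
      then have "ereal (real_of_int m) < ereal (real_of_int (fls_subdegree f))" using c by (rule less_le_trans)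
      then have "m < fls_subdegree f" by simp
      then show "fls_nth f m = 0" by simp
    qed
  qed (simp add: lbz_def)
qed

lemma lbz_0 [simp]: "lbz 0 c" by (simp add: lbz_def)
lemma lbz_1: "c \<le> 0 \<Longrightarrow> lbz (1::'a::{zero_neq_one} fls) c"
  by (simp add: lbz_iff zero_ereal_def)
lemma lbz_add: "lbz f c \<Longrightarrow> lbz g c \<Longrightarrow> lbz (f + g) c"
  by (simp add: lbz_def)
lemma lbz_diff: "lbz f c \<Longrightarrow> lbz g c \<Longrightarrow> lbz (f - g :: 'a::ab_group_add fls) c"
  by (simp add: lbz_def)
lemma lbz_sum: "(\<And>x. x \<in> S \<Longrightarrow> lbz (f x) c) \<Longrightarrow> lbz (sum f S) c"
  by (simp add: lbz_def fls_nth_sum)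
lemma lbz_mono: "lbz f c \<Longrightarrow> c' \<le> c \<Longrightarrow> lbz f c'"
  unfolding lbz_def using less_le_trans by blast
lemma lbz_mult:
  fixes f g :: "'a::field fls"
  shows "lbz f a \<Longrightarrow> lbz g b \<Longrightarrow> lbz (f * g) (a + b)"
  unfolding lbz_iff
  by (cases "f = 0"; cases "g = 0") (auto intro: add_mono order.trans)

lemma gz_0 [simp]: "gz p 0 c" by (simp add: gz_def)
lemma gz_add: "gz p f c \<Longrightarrow> gz p g c \<Longrightarrow> gz p (f + g) c"
  by (simp add: gz_def)
lemma gz_diff: "gz p f c \<Longrightarrow> gz p g c \<Longrightarrow> gz p (f - g :: 'a::ab_group_add fls) c"
  by (simp add: gz_def)
lemma gz_sum: "(\<And>x. x \<in> S \<Longrightarrow> gz p (f x) c) \<Longrightarrow> gz p (sum f S) c"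
  by (simp add: gz_def fls_nth_sum)
lemma gz_mono: "gz p f c \<Longrightarrow> c' \<le> c \<Longrightarrow> gz p f c'"
  unfolding gz_def using less_le_trans by blast

lemma pz_0 [simp]: "pz p 0" by (simp add: pz_def)
lemma pz_1 [simp]: "pz p (1::'a::{zero_neq_one} fls)" by (simp add: pz_def)
lemma pz_add: "pz p f \<Longrightarrow> pz p g \<Longrightarrow> pz p (f + g)"
  by (simp add: pz_def)
lemma pz_diff: "pz p f \<Longrightarrow> pz p g \<Longrightarrow> pz p (f - g :: 'a::ab_group_add fls)"
  by (simp add: pz_def)
lemma pz_sum: "(\<And>x. x \<in> S \<Longrightarrow> pz p (f x)) \<Longrightarrow> pz p (sum f S)"
  by (simp add: pz_def fls_nth_sum)

lemma pz_mult:
  fixes f g :: "'a::comm_ring_1 fls"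
  assumes "pz p f" "pz p g"
  shows "pz p (f * g)"
  unfolding pz_def
proof (intro allI impI)
  fix m :: int assume m: "\<not> int p dvd m"
  have "fls_nth (f * g) m = (\<Sum>i=fls_subdegree f..m - fls_subdegree g. fls_nth f i * fls_nth g (m - i))"
    by (rule fls_times_nth(2))
  also have "\<dots> = 0"
  proof (intro sum.neutral ballI)
    fix i
    show "fls_nth f i * fls_nth g (m - i) = 0"
    proof (cases "int p dvd i")
      case True
      then have "\<not> int p dvd (m - i)" using m by (metis dvd_add minus_add_cancel add.commute diff_conv_add_uminus)
      then show ?thesis using assms(2) unfolding pz_def by simp
    next
      case False
      then show ?thesis using assms(1) unfolding pz_def by simp
    qed
  qed
  finally show "fls_nth (f * g) m = 0" .
qed

lemma gz_mult:
  fixes f g :: "'a::comm_ring_1 fls"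
  assumes "pz p f" "gz p g b"
  shows "gz p (f * g) (ereal (real_of_int (fls_subdegree f)) + b)"
  unfolding gz_def
proof (intro allI impI)
  fix m :: int assume m: "int p dvd m \<and> ereal (real_of_int m) < ereal (real_of_int (fls_subdegree f)) + b"
  have "fls_nth (f * g) m = (\<Sum>i=fls_subdegree f..m - fls_subdegree g. fls_nth f i * fls_nth g (m - i))"
    by (rule fls_times_nth(2))
  also have "\<dots> = 0"
  proof (intro sum.neutral ballI)
    fix i assume i: "i \<in> {fls_subdegree f..m - fls_subdegree g}"
    show "fls_nth f i * fls_nth g (m - i) = 0"
    proof (cases "int p dvd i")
      case True
      then have d: "int p dvd (m - i)" using m by simp
      have "ereal (real_of_int (m - i)) < b"
      proof (cases b)
        case (real r)
        then show ?thesis using m i by auto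
      next
        case PInf then show ?thesis by simp
      next
        case MInf then show ?thesis using m by simp
      qed
      then show ?thesis using assms(2) d unfolding gz_def by simp
    next
      case False
      then show ?thesis using assms(1) unfolding pz_def by simp
    qed
  qed
  finally show "fls_nth (f * g) m = 0" .
qed


definition cadm :: "nat \<Rightarrow> (nat \<Rightarrow> nat \<Rightarrow> ereal) \<Rightarrow> bool" where
  "cadm n c \<longleftrightarrow> (\<forall>i\<in>{1..n}. c i i \<le> 0) \<and>
     (\<forall>i\<in>{1..n}. \<forall>l\<in>{1..n}. \<forall>j\<in>{1..n}. i \<le> l \<and> l \<le> j \<longrightarrow> c i j \<le> c i l + c l j)"

definition Gd :: "nat \<Rightarrow> nat \<Rightarrow> (nat \<Rightarrow> nat \<Rightarrow> ereal) \<Rightarrow> 'a::{zero,one} fls mx \<Rightarrow> bool" where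
  "Gd n p c X \<longleftrightarrow> (\<forall>i\<in>{1..n}. \<forall>j\<in>{1..n}. (j < i \<longrightarrow> X i j = 0) \<and> X i i = 1 \<and>
      pz p (X i j) \<and> lbz (X i j) (c i j))"

lemma Gd_ut: "Gd n p c X \<Longrightarrow> ut n X"
  unfolding Gd_def ut_def by auto

lemma Gd_mmul:
  fixes X Y :: "'a::field fls mx"
  assumes c: "cadm n c" and X: "Gd n p c X" and Y: "Gd n p c Y"
  shows "Gd n p c (mmul n X Y)"
  unfolding Gd_def
proof (intro ballI conjI impI)
  fix i j assume i: "i \<in> {1..n}" and j: "j \<in> {1..n}"
  show "mmul n X Y i j = 0" if ji: "j < i"
    unfolding mmul_def
  proof (intro sum.neutral ballI)
    fix l assume l: "l \<in> {1..n}"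
    show "X i l * Y l j = 0"
    proof (cases "l < i")
      case True then show ?thesis using X i l unfolding Gd_def by simp
    next
      case False then have "j < l" using ji by simp
      then show ?thesis using Y j l unfolding Gd_def by simp
    qed
  qed
  show "mmul n X Y i i = 1"
  proof -
    have "mmul n X Y i i = X i i * Y i i + (\<Sum>l\<in>{i<..n}. X i l * Y l i)"
      unfolding mmul_def using X i by (intro sum_split_diag) (auto simp: Gd_def)
    also have "(\<Sum>l\<in>{i<..n}. X i l * Y l i) = 0"
      using Y i by (intro sum.neutral) (auto simp: Gd_def)
    finally show ?thesis using X Y i by (simp add: Gd_def)
  qed
  show "pz p (mmul n X Y i j)"
    unfolding mmul_def using X Y i j by (intro pz_sum pz_mult) (auto simp: Gd_def)
  show "lbz (mmul n X Y i j) (c i j)"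
    unfolding mmul_def
  proof (intro lbz_sum)
    fix l assume l: "l \<in> {1..n}"
    show "lbz (X i l * Y l j) (c i j)"
    proof (cases "i \<le> l \<and> l \<le> j")
      case True
      have "lbz (X i l * Y l j) (c i l + c l j)"
        using X Y i j l by (intro lbz_mult) (auto simp: Gd_def)
      moreover have "c i j \<le> c i l + c l j" using c i j l True unfolding cadm_def by simp
      ultimately show ?thesis by (rule lbz_mono)
    next
      case False
      then have "X i l * Y l j = 0" using X Y i j l unfolding Gd_def by auto
      then show ?thesis by (simp only: lbz_0)
    qed
  qed
qed

lemma Gd_rinv:
  fixes X :: "'a::field fls mx"
  assumes c: "cadm n c" and X: "Gd n p c X"
  shows "Gd n p c (rinv n X)"
proof -
  have ut: "ut n (rinv n X)" by (rule rinv_ut[OF Gd_ut[OF X]])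
  have "\<forall>j\<in>{1..n}. pz p (rinv n X i j) \<and> lbz (rinv n X i j) (c i j)" if "i \<in> {1..n}" for i
    using that
  proof (induction i rule: measure_induct_rule[where f="\<lambda>i. n - i"])
    case (less i)
    show ?case
    proof (intro ballI conjI)
      fix j assume j: "j \<in> {1..n}"
      have eq: "rinv n X i j = idm i j - (\<Sum>l\<in>{i<..n}. X i l * rinv n X l j)"
        using less.prems j by (rule rinv_in)
      have pidm: "pz p (idm i j :: 'a fls)" by (simp add: idm_def)
      show "pz p (rinv n X i j)" unfolding eq
        using less X j by (intro pz_diff pidm pz_sum pz_mult) (auto simp: Gd_def)
      have lidm: "lbz (idm i j :: 'a fls) (c i j)"
        using c less.prems by (auto simp: idm_def cadm_def intro: lbz_1)
      show "lbz (rinv n X i j) (c i j)" unfolding eq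
      proof (intro lbz_diff lidm lbz_sum)
        fix l assume l: "l \<in> {i<..n}"
        show "lbz (X i l * rinv n X l j) (c i j)"
        proof (cases "l \<le> j")
          case True
          have "lbz (X i l * rinv n X l j) (c i l + c l j)"
            using X less l j less.prems by (intro lbz_mult) (auto simp: Gd_def)
          moreover have "c i j \<le> c i l + c l j" using c less.prems j l True unfolding cadm_def by simp
          ultimately show ?thesis by (rule lbz_mono)
        next
          case False
          then have "rinv n X l j = 0" using ut l j unfolding ut_def by auto
          then show ?thesis by simp
        qed
      qed
    qed
  qed
  then show ?thesis using ut unfolding Gd_def ut_def by auto
qed


lemma fps_mult_low:
  fixes F D :: "'a::comm_ring_1 fps"
  assumes "\<forall>t<m. D $ t = 0"
  shows "\<forall>i<m. (F * D) $ i = 0" and "(F * D) $ m = F $ 0 * D $ m"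
proof -
  show "\<forall>i<m. (F * D) $ i = 0"
    using assms by (auto simp: fps_mult_nth intro!: sum.neutral)
  have "(F * D) $ m = (\<Sum>j=0..m. F $ j * D $ (m - j))" by (rule fps_mult_nth)
  also have "\<dots> = F $ 0 * D $ (m - 0) + (\<Sum>j=Suc 0..m. F $ j * D $ (m - j))"
    by (rule sum.atLeast_Suc_atMost) simp
  also have "(\<Sum>j=Suc 0..m. F $ j * D $ (m - j)) = 0"
    using assms by (intro sum.neutral) auto
  finally show "(F * D) $ m = F $ 0 * D $ m" by simp
qed

lemma fps_pert_power:
  fixes F :: "'a::comm_ring_1 fps" and c :: 'a
  assumes F0: "F $ 0 = 1" and m: "m \<ge> 1"
  defines "E \<equiv> fps_const c * fps_X ^ m"
  shows "(\<forall>i<m. ((F + E) ^ k - F ^ k) $ i = 0) \<and> ((F + E) ^ k - F ^ k) $ m = of_nat k * c"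
proof (induction k)
  case 0
  then show ?case by simp
next
  case (Suc k)
  define D where "D = (F + E) ^ k - F ^ k"
  have D: "\<forall>t<m. D $ t = 0" "D $ m = of_nat k * c" using Suc D_def by auto
  have EG: "(E * G) $ i = (if i < m then 0 else c * G $ (i - m))" for G :: "'a fps" and i
    unfolding E_def by (simp add: mult.assoc fps_X_power_mult_nth)
  have eq: "(F + E) ^ Suc k - F ^ Suc k = F * D + E * F ^ k + E * D"
    unfolding D_def by (simp add: algebra_simps)
  have "\<forall>i<m. (E * F ^ k) $ i = 0" "\<forall>i<m. (E * D) $ i = 0" using EG by auto
  then have "\<forall>i<m. ((F + E) ^ Suc k - F ^ Suc k) $ i = 0"
    unfolding eq using fps_mult_low(1)[OF D(1), of F] by simp
  moreover have "((F + E) ^ Suc k - F ^ Suc k) $ m = of_nat (Suc k) * c"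
  proof -
    have "D $ 0 = 0" using D(1) m by simp
    moreover have "(F ^ k) $ 0 = 1" using F0 by (simp add: fps_nth_power_0)
    ultimately have "(E * D) $ m = 0" "(E * F ^ k) $ m = c" using EG by auto
    then show ?thesis
      unfolding eq using fps_mult_low(2)[OF D(1), of F] F0 D(2) by (simp add: algebra_simps)
  qed
  ultimately show ?case by blast
qed

lemma fps_agree_power:
  fixes F G :: "'a::comm_ring_1 fps"
  assumes "\<forall>i\<le>n. F $ i = G $ i"
  shows "\<forall>i\<le>n. (F ^ k) $ i = (G ^ k) $ i"
proof (induction k)
  case (Suc k)
  show ?case
  proof (intro allI impI)
    fix i assume i: "i \<le> n"
    have "(F ^ Suc k) $ i = (\<Sum>j=0..i. F $ j * (F ^ k) $ (i - j))" by (simp add: fps_mult_nth)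
    also have "\<dots> = (\<Sum>j=0..i. G $ j * (G ^ k) $ (i - j))"
      using assms Suc i by (intro sum.cong) auto
    also have "\<dots> = (G ^ Suc k) $ i" by (simp add: fps_mult_nth)
    finally show "(F ^ Suc k) $ i = (G ^ Suc k) $ i" .
  qed
qed simp

lemma fps_root_exists:
  fixes a :: "'a::field fps"
  assumes R: "of_nat R \<noteq> (0::'a)" and a0: "a $ 0 = 1"
  shows "\<exists>b. b $ 0 = 1 \<and> b ^ R = a"
proof -
  define T where "T = rec_nat (1::'a fps)
     (\<lambda>n F. F + fps_const ((a $ Suc n - (F ^ R) $ Suc n) / of_nat R) * fps_X ^ Suc n)"
  have T0: "T 0 = 1" and TS: "T (Suc n) = T n + fps_const ((a $ Suc n - (T n ^ R) $ Suc n) / of_nat R) * fps_X ^ Suc n" for n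
    unfolding T_def by simp_all
  have stab: "\<forall>i\<le>n. T (Suc n) $ i = T n $ i" for n
    by (auto simp: TS)
  have stab': "T n' $ i = T n $ i" if "i \<le> n" "n \<le> n'" for i n n'
    using that(2)
  proof (induction n' rule: dec_induct)
    case (step k)
    then show ?case using stab[of k] that(1) by simp
  qed simp
  have inv: "T n $ 0 = 1 \<and> (\<forall>i\<le>n. (T n ^ R) $ i = a $ i)" for n
  proof (induction n)
    case 0
    then show ?case using a0 by (simp add: T0)
  next
    case (Suc n)
    define c where "c = (a $ Suc n - (T n ^ R) $ Suc n) / of_nat R"
    have TS': "T (Suc n) = T n + fps_const c * fps_X ^ Suc n" unfolding c_def TS ..
    have P: "(\<forall>i<Suc n. ((T n + fps_const c * fps_X ^ Suc n) ^ R - T n ^ R) $ i = 0) \<and>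
        ((T n + fps_const c * fps_X ^ Suc n) ^ R - T n ^ R) $ Suc n = of_nat R * c"
      by (rule fps_pert_power) (use Suc in auto)
    show ?case
    proof (intro conjI allI impI)
      show "T (Suc n) $ 0 = 1" using Suc by (simp add: TS')
      fix i assume i: "i \<le> Suc n"
      show "(T (Suc n) ^ R) $ i = a $ i"
      proof (cases "i = Suc n")
        case True
        have Rc: "of_nat R * c = a $ Suc n - (T n ^ R) $ Suc n" using R unfolding c_def by simp
        have "((T n + fps_const c * fps_X ^ Suc n) ^ R) $ Suc n - (T n ^ R) $ Suc n = of_nat R * c"
          using conjunct2[OF P] by (simp only: fps_sub_nth)
        then show ?thesis using True unfolding TS' Rc by simp
      next
        case False
        then have "i < Suc n" using i by simp
        then show ?thesis using P Suc unfolding TS' by (simp add: algebra_simps)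
      qed
    qed
  qed
  define b where "b = Abs_fps (\<lambda>n. T n $ n)"
  have "b ^ R = a"
  proof (rule fps_ext)
    fix n
    have "\<forall>i\<le>n. b $ i = T n $ i"
    proof (intro allI impI)
      fix i assume "i \<le> n"
      then show "b $ i = T n $ i" unfolding b_def using stab'[of i i n] by simp
    qed
    then have "(b ^ R) $ n = (T n ^ R) $ n" using fps_agree_power by blast
    then show "(b ^ R) $ n = a $ n" using inv by simp
  qed
  moreover have "b $ 0 = 1" unfolding b_def using inv by simp
  ultimately show ?thesis by blast
qed


definition rs :: "nat \<Rightarrow> 'a::zero fps \<Rightarrow> bool" where
  "rs R F \<longleftrightarrow> (\<forall>e. \<not> R dvd e \<longrightarrow> F $ e = 0)"

lemma rs_1 [simp]: "rs R (1::'a::{zero,one} fps)"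
  unfolding rs_def by (auto simp: fps_one_nth)

lemma rs_add: "rs R F \<Longrightarrow> rs R G \<Longrightarrow> rs R (F + G :: 'a::monoid_add fps)"
  unfolding rs_def by simp

lemma rs_XR: "rs R (fps_X ^ R :: 'a::comm_ring_1 fps)"
  unfolding rs_def by simp

lemma rs_mult:
  fixes F G :: "'a::comm_ring_1 fps"
  assumes "rs R F" "rs R G"
  shows "rs R (F * G)"
  unfolding rs_def
proof (intro allI impI)
  fix e assume e: "\<not> R dvd e"
  show "(F * G) $ e = 0"
    unfolding fps_mult_nth
  proof (intro sum.neutral ballI)
    fix i assume i: "i \<in> {0..e}"
    show "F $ i * G $ (e - i) = 0"
    proof (cases "R dvd i")
      case True
      then have "\<not> R dvd (e - i)" using e i by (metis atLeastAtMost_iff dvd_add le_add_diff_inverse)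
      then show ?thesis using assms(2) unfolding rs_def by simp
    next
      case False then show ?thesis using assms(1) unfolding rs_def by simp
    qed
  qed
qed

lemma rs_power: "rs R (F :: 'a::comm_ring_1 fps) \<Longrightarrow> rs R (F ^ k)"
  by (induction k) (auto intro: rs_mult)

lemma h_exists:
  fixes R :: nat
  assumes R: "of_nat R \<noteq> (0::'a::field)"
  shows "\<exists>h::'a fps. h $ 0 = 1 \<and> h ^ R * (1 + fps_X ^ R) = 1 \<and> rs R h"
proof -
  have R0: "R > 0" using R by (cases R) auto
  obtain phi :: "'a fps" where phi: "phi $ 0 = 1" "phi ^ R = inverse (1 + fps_X)"
    using fps_root_exists[OF R, of "inverse (1 + fps_X)"] by auto
  have phi1: "phi ^ R * (1 + fps_X) = 1"
    unfolding phi(2) by (rule inverse_mult_eq_1) simp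
  have XR0: "(fps_X ^ R :: 'a fps) $ 0 = 0" using R0 by simp
  define h where "h = phi oo fps_X ^ R"
  have "h $ 0 = 1" unfolding h_def using phi(1) by (simp add: fps_compose_nth)
  moreover have "h ^ R * (1 + fps_X ^ R) = 1"
  proof -
    have "h ^ R = phi ^ R oo fps_X ^ R" unfolding h_def by (rule fps_compose_power[OF XR0])
    moreover have "(1 + fps_X :: 'a fps) oo fps_X ^ R = 1 + fps_X ^ R"
      using XR0 by (simp add: fps_compose_add_distrib)
    ultimately have "h ^ R * (1 + fps_X ^ R) = (phi ^ R * (1 + fps_X)) oo fps_X ^ R"
      by (simp add: fps_compose_mult_distrib[OF XR0])
    then show ?thesis using phi1 by simp
  qed
  moreover have "rs R h"
    unfolding rs_def
  proof (intro allI impI)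
    fix e assume e: "\<not> R dvd e"
    have "h $ e = (\<Sum>i=0..e. phi $ i * ((fps_X ^ R) ^ i) $ e)"
      unfolding h_def by (rule fps_compose_nth)
    also have "\<dots> = 0"
    proof (intro sum.neutral ballI)
      fix i
      have "e \<noteq> R * i" using e by auto
      then have "((fps_X ^ R :: 'a fps) ^ i) $ e = 0"
        by (simp add: power_mult[symmetric])
      then show "phi $ i * ((fps_X ^ R) ^ i) $ e = 0" by simp
    qed
    finally show "h $ e = 0" .
  qed
  ultimately show ?thesis by blast
qed

lemma h_unique:
  fixes h1 h2 :: "'a::field fps"
  assumes R: "of_nat R \<noteq> (0::'a)"
    and h1: "h1 $ 0 = 1" "h1 ^ R * (1 + fps_X ^ R) = 1"
    and h2: "h2 $ 0 = 1" "h2 ^ R * (1 + fps_X ^ R) = 1"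
  shows "h1 = h2"
proof -
  have nz: "(1 + fps_X ^ R :: 'a fps) \<noteq> 0"
  proof
    assume "(1 + fps_X ^ R :: 'a fps) = 0"
    then have "h1 ^ R * (1 + fps_X ^ R) = 0" by simp
    then show False using h1 by simp
  qed
  have "h1 ^ R = h2 ^ R" using h1(2) h2(2) nz by (metis mult_right_cancel)
  then have "(h1 - h2) * (\<Sum>i<R. h2 ^ (R - Suc i) * h1 ^ i) = 0"
    by (simp add: power_diff_sumr2[symmetric])
  moreover have "(\<Sum>i<R. h2 ^ (R - Suc i) * h1 ^ i) $ 0 = of_nat R"
    using h1 h2 by (simp add: fps_sum_nth fps_nth_power_0)
  then have "(\<Sum>i<R. h2 ^ (R - Suc i) * h1 ^ i) \<noteq> 0" using R by auto
  ultimately show ?thesis by simp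
qed

lemma hR_props:
  assumes R: "of_nat R \<noteq> (0::'a::field)"
  shows "(hR R :: 'a fps) $ 0 = 1 \<and> (hR R :: 'a fps) ^ R * (1 + fps_X ^ R) = 1 \<and> rs R (hR R :: 'a fps)"
proof -
  obtain h :: "'a fps" where h: "h $ 0 = 1" "h ^ R * (1 + fps_X ^ R) = 1" "rs R h"
    using h_exists[OF R] by blast
  have "hR R = h"
    unfolding hR_def
    by (rule the_equality) (use h h_unique[OF R] in auto)
  then show ?thesis using h by simp
qed


lemma fls_X_intpow_powi:
  "(fls_X_intpow a :: 'a::field fls) powi m = fls_X_intpow (m * a)"
proof (cases "m \<ge> 0")
  case True
  then show ?thesis by (simp add: power_int_def fls_X_intpow_power)
next
  case False
  have inv: "inverse (fls_X_intpow b :: 'a fls) = fls_X_intpow (- b)" for b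
    by (rule inverse_unique) (use fls_X_intpow_times_fls_X_intpow[of b "-b"] in simp)
  show ?thesis using False fls_X_intpow_power[of "-a" "nat (-m)"]
    by (simp add: power_int_def inv)
qed

lemma fls_compose_sum:
  assumes "H \<noteq> 0" "fps_nth H 0 = 0"
  shows "fls_compose_fps (sum f S) H = (\<Sum>x\<in>S. fls_compose_fps (f x) H)"
  by (induction S rule: infinite_finite_induct) (auto simp: fls_compose_fps_add[OF assms])

lemma gz_fps_minus1:
  fixes K :: "'a::comm_ring_1 fps"
  assumes rs: "rs R K" and K0: "K $ 0 = 1" and pR: "\<forall>k. p dvd R * k \<longrightarrow> p dvd k" and p: "p > 0"
  shows "gz p (fps_to_fls K - 1) (ereal (real (p * R)))"
  unfolding gz_def
proof (intro allI impI)
  fix e :: int assume e: "int p dvd e \<and> ereal (real_of_int e) < ereal (real (p * R))"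
  show "fls_nth (fps_to_fls K - 1) e = 0"
  proof (cases "e \<le> 0")
    case True
    show ?thesis
    proof (cases "e = 0")
      case True then show ?thesis using K0 by simp
    next
      case False then have "e < 0" using \<open>e \<le> 0\<close> by simp
      then show ?thesis by simp
    qed
  next
    case False
    then have e0: "e > 0" by simp
    have "K $ nat e = 0"
    proof (cases "R dvd nat e")
      case True
      then obtain k where k: "nat e = R * k" by blast
      have "int p dvd int (nat e)" using e e0 by simp
      then have "p dvd nat e" by (simp only: int_dvd_int_iff)
      then have "p dvd R * k" unfolding k .
      then have "p dvd k" using pR by blast
      moreover have "k \<noteq> 0" using k e0 by (cases "k = 0") auto
      ultimately have "k \<ge> p" by (simp add: dvd_imp_le)
      then have "R * p \<le> R * k" by (rule mult_le_mono2)
      then have "R * p \<le> nat e" using k by simp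
      then have "int (R * p) \<le> int (nat e)" by (simp only: of_nat_le_iff)
      then have "int (p * R) \<le> e" using e0 by (simp add: mult.commute)
      then have "real_of_int e \<ge> real (p * R)" by (metis of_int_of_nat_eq of_int_le_iff)
      then show ?thesis using e by simp
    next
      case False
      then show ?thesis using rs unfolding rs_def by simp
    qed
    then show ?thesis using e0 by simp
  qed
qed

lemma gz_powi_minus1:
  fixes h :: "'a::field fps"
  assumes h: "h $ 0 = 1" "h ^ R * (1 + fps_X ^ R) = 1" "rs R h" and R: "R > 0"
    and pR: "\<forall>k. p dvd R * k \<longrightarrow> p dvd k" and p: "p > 0"
  shows "gz p (fps_to_fls h powi m - 1) (ereal (real (p * R)))"
proof -
  define K where "K = (if m \<ge> 0 then h ^ nat m else (h ^ (R - 1) * (1 + fps_X ^ R)) ^ nat (- m))"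
  have rsK: "rs R K" unfolding K_def using h R
    by (auto intro!: rs_power rs_mult rs_add rs_XR)
  have K0: "K $ 0 = 1" unfolding K_def using h R by (simp add: fps_nth_power_0 zero_power)
  have inv: "inverse (fps_to_fls h) = fps_to_fls (h ^ (R - 1) * (1 + fps_X ^ R))"
  proof (rule inverse_unique)
    have "h * (h ^ (R - 1) * (1 + fps_X ^ R)) = h ^ R * (1 + fps_X ^ R)"
      using R by (simp add: mult.assoc[symmetric] power_eq_if)
    then show "fps_to_fls h * fps_to_fls (h ^ (R - 1) * (1 + fps_X ^ R)) = 1"
      using h(2) by (simp flip: fls_times_fps_to_fls)
  qed
  have "fps_to_fls h powi m = fps_to_fls K"
    unfolding K_def power_int_def inv by (simp add: fps_to_fls_power)
  then show ?thesis using gz_fps_minus1[OF rsK K0 pR p] by simp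
qed


lemma D_gz:
  fixes a :: "'k::field fls"
  assumes pc: "prime CHAR('k)"
    and alg: "\<forall>f::'k poly. degree f > 0 \<longrightarrow> (\<exists>x. poly f x = 0)"
    and R: "of_nat R \<noteq> (0::'k)" and N: "N \<ge> 1"
    and pR: "\<forall>k. CHAR('k) dvd R * k \<longrightarrow> CHAR('k) dvd k"
    and neg: "\<forall>l::int. l \<ge> 0 \<longrightarrow> fls_nth a l = 0"
  shows "gz CHAR('k) (embR (CHAR('k) ^ N) R a - iotaR (CHAR('k) ^ N) a ^ (CHAR('k) ^ N))
           (ereal (real_of_int (int (CHAR('k) ^ N) * fls_subdegree a)) + ereal (real (CHAR('k) * R)))"
proof -
  define p where "p = CHAR('k)"
  define q where "q = CHAR('k) ^ N"
  define S where "S = {fls_subdegree a..<0}"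
  define h :: "'k fps" where "h = hR R"
  have hp: "h $ 0 = 1" "h ^ R * (1 + fps_X ^ R) = 1" "rs R h"
    using hR_props[OF R] unfolding h_def by auto
  have R0: "R > 0" using R by (cases R) auto
  have p0: "p > 0" unfolding p_def using pc prime_gt_0_nat by blast
  have q0: "q > 0" unfolding q_def using pc prime_gt_0_nat by simp
  have pq: "int p dvd int q * m" for m :: int
    unfolding p_def q_def using N by (simp add: dvd_mult2 of_nat_power dvd_power)
  have finS: "finite S" unfolding S_def by simp
  have suppa: "\<forall>m. m \<notin> S \<longrightarrow> fls_nth a m = 0"
    unfolding S_def using neg by (auto simp: not_le)
  have rt: "(THE y. y ^ q = x) ^ q = x" for x :: 'k
    unfolding q_def by (rule root_the[OF alg pc])
  have rt0: "(THE y. y ^ q = (0::'k)) = 0"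
    unfolding q_def by (rule root_the_0[OF pc])
  have iota_nth: "fls_nth (iotaR q a) m = (THE y. y ^ q = fls_nth a m)" for m
    unfolding q_def by (rule iotaR_nth[OF pc])
  have suppb: "\<forall>m. m \<notin> S \<longrightarrow> fls_nth (iotaR q a) m = 0"
  proof (intro allI impI)
    fix m assume "m \<notin> S"
    then have am: "fls_nth a m = 0" using suppa by blast
    show "fls_nth (iotaR q a) m = 0" by (simp only: iota_nth am rt0)
  qed
  have B: "iotaR q a ^ q = (\<Sum>m\<in>S. fls_const (fls_nth a m) * fls_X_intpow (int q * m))"
    unfolding q_def using frob_fin[OF pc finS suppb[unfolded q_def], of N]
    by (simp add: iota_nth[unfolded q_def] rt[unfolded q_def])
  define g :: "'k fps" where "g = gR q R"
  have g: "g = fps_X ^ q * h" unfolding g_def gR_def h_def ..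
  have gnz: "g \<noteq> 0" using hp(1) g by (metis fps_nonzero_nth mult_eq_0_iff one_neq_zero power_eq_0_iff fps_X_neq_zero)
  have g0: "g $ 0 = 0" using g q0 by simp
  define Hh where "Hh = fps_to_fls h"
  have gpow: "fps_to_fls g powi m = fls_X_intpow (int q * m) * Hh powi m" for m
  proof -
    have "fps_to_fls g = fls_X_intpow (int q) * Hh"
      unfolding g Hh_def by (simp add: fls_times_fps_to_fls fps_to_fls_power fls_X_power_conv_shift_1)
    then show ?thesis by (simp add: power_int_mult_distrib fls_X_intpow_powi mult.commute)
  qed
  have E: "embR q R a = (\<Sum>m\<in>S. fls_const (fls_nth a m) * (fls_X_intpow (int q * m) * Hh powi m))"
  proof -
    have "embR q R a = fls_compose_fps (\<Sum>m\<in>S. fls_const (fls_nth a m) * fls_X_intpow m) g"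
      unfolding embR_def g_def using fls_fin_repr[OF finS suppa] by simp
    also have "\<dots> = (\<Sum>m\<in>S. fls_compose_fps (fls_const (fls_nth a m) * fls_X_intpow m) g)"
      by (rule fls_compose_sum[OF gnz g0])
    also have "\<dots> = (\<Sum>m\<in>S. fls_const (fls_nth a m) * fps_to_fls g powi m)"
      by (intro sum.cong refl)
         (simp add: fls_compose_fps_mult[OF gnz g0] fls_compose_fps_shift[OF gnz])
    finally show ?thesis by (simp add: gpow)
  qed
  have D: "embR q R a - iotaR q a ^ q =
     (\<Sum>m\<in>S. (fls_const (fls_nth a m) * fls_X_intpow (int q * m)) * (Hh powi m - 1))"
    unfolding E B by (simp add: sum_subtractf[symmetric] algebra_simps)
  have pRR: "\<forall>k. p dvd R * k \<longrightarrow> p dvd k" using pR unfolding p_def .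
  have "gz p (embR q R a - iotaR q a ^ q)
           (ereal (real_of_int (int q * fls_subdegree a)) + ereal (real (p * R)))"
    unfolding D
  proof (intro gz_sum)
    fix m assume m: "m \<in> S"
    define f :: "'k fls" where "f = fls_const (fls_nth a m) * fls_X_intpow (int q * m)"
    show "gz p (f * (Hh powi m - 1)) (ereal (real_of_int (int q * fls_subdegree a)) + ereal (real (p * R)))"
    proof (cases "fls_nth a m = 0")
      case True then show ?thesis unfolding f_def by simp
    next
      case False
      have pzf: "pz p f" unfolding pz_def f_def using pq by (auto simp: fls_const_X_nth)
      have sdf: "fls_subdegree f = int q * m" unfolding f_def using False
        by (simp add: fls_const_nonzero)
      have "gz p (Hh powi m - 1) (ereal (real (p * R)))"
        unfolding Hh_def by (rule gz_powi_minus1[OF hp R0 pRR p0])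
      from gz_mult[OF pzf this]
      have "gz p (f * (Hh powi m - 1)) (ereal (real_of_int (int q * m)) + ereal (real (p * R)))"
        by (simp add: sdf)
      moreover have "real_of_int (int q * fls_subdegree a) \<le> real_of_int (int q * m)"
        using m unfolding S_def by (simp add: mult_left_mono)
      ultimately show ?thesis by (elim gz_mono) simp
    qed
  qed
  then show ?thesis unfolding p_def q_def .
qed


lemma ereal_EL1:
  fixes x y z :: ereal and Q :: real
  assumes "x \<noteq> \<infinity>" "y \<noteq> \<infinity>" "z \<noteq> \<infinity>" "x + y \<le> z" "Q > 0"
  shows "- ereal Q * z \<le> - ereal Q * x + - ereal Q * y"
proof (cases x)
  case MInf then show ?thesis using assms by (cases y) auto
next
  case (real rx)
  show ?thesis
  proof (cases y)
    case MInf then show ?thesis using assms real by auto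
  next
    case (real ry)
    then obtain rz where rz: "z = ereal rz" using assms \<open>x = ereal rx\<close> by (cases z) auto
    have "rx + ry \<le> rz" using assms real \<open>x = ereal rx\<close> rz by simp
    then have "Q * (rx + ry) \<le> Q * rz" using assms(5) by (intro mult_left_mono) auto
    then show ?thesis using real \<open>x = ereal rx\<close> rz by (simp add: algebra_simps)
  qed (use assms in auto)
qed (use assms in auto)

lemma ereal_EL2:
  fixes x y z :: ereal and Q :: real and s1 s2 t r :: real
  assumes "x \<noteq> \<infinity>" "y \<noteq> \<infinity>" "z \<noteq> \<infinity>" "Q > 0"
    and "- ereal Q * x \<le> ereal s1" "- ereal Q * y \<le> ereal s2"
    and "x + - ereal t + y \<le> z"
  shows "- ereal Q * z + ereal r \<le> ereal s2 + (ereal s1 + (ereal (Q * t) + ereal r))"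
proof -
  obtain rx where rx: "x = ereal rx" using assms(1,4,5) by (cases x) auto
  obtain ry where ry: "y = ereal ry" using assms(2,4,6) by (cases y) auto
  obtain rz where rz: "z = ereal rz" using assms(3,7) rx ry by (cases z) auto
  have "rx - t + ry \<le> rz" using assms(7) rx ry rz by simp
  then have "Q * (rx - t + ry) \<le> Q * rz" using assms(4) by (intro mult_left_mono) auto
  moreover have "- Q * rx \<le> s1" "- Q * ry \<le> s2" using assms(5,6) rx ry by auto
  ultimately show ?thesis using rx ry rz by (simp add: algebra_simps)
qed

lemma root_the_1:
  assumes pc: "prime CHAR('k::field)"
  shows "(THE y::'k. y ^ (CHAR('k) ^ e) = 1) = 1"
  by (rule the_equality) (use frob_inj[OF pc, of _ e 1] in auto)

lemma iotaR_0: "prime CHAR('k::field) \<Longrightarrow> iotaR (CHAR('k) ^ e) (0::'k fls) = 0"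
  by (rule fls_eqI) (simp add: iotaR_nth root_the_0 del: power_eq_0_iff)

lemma iotaR_1: "prime CHAR('k::field) \<Longrightarrow> iotaR (CHAR('k) ^ e) (1::'k fls) = 1"
  by (rule fls_eqI) (simp add: iotaR_nth root_the_0 root_the_1 del: power_eq_0_iff)

lemma iotaR_nz_iff:
  assumes pc: "prime CHAR('k::field)"
    and alg: "\<forall>f::'k poly. degree f > 0 \<longrightarrow> (\<exists>x. poly f x = 0)"
  shows "fls_nth (iotaR (CHAR('k) ^ e) x) l = 0 \<longleftrightarrow> fls_nth (x :: 'k fls) l = 0"
proof -
  have q: "CHAR('k) ^ e > 0" using pc prime_gt_0_nat by simp
  have r: "(THE y. y ^ (CHAR('k) ^ e) = fls_nth x l) ^ (CHAR('k) ^ e) = fls_nth x l"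
    by (rule root_the[OF alg pc])
  show ?thesis
  proof
    assume "fls_nth (iotaR (CHAR('k) ^ e) x) l = 0"
    then have "(THE y. y ^ (CHAR('k) ^ e) = fls_nth x l) = 0" by (simp only: iotaR_nth[OF pc])
    then have "0 ^ (CHAR('k) ^ e) = fls_nth x l" using r by simp
    then show "fls_nth x l = 0" using q by (metis zero_power)
  next
    assume "fls_nth x l = 0"
    then show "fls_nth (iotaR (CHAR('k) ^ e) x) l = 0"
      by (simp only: iotaR_nth[OF pc] root_the_0[OF pc])
  qed
qed

lemma iotaR_subdeg:
  assumes pc: "prime CHAR('k::field)"
    and alg: "\<forall>f::'k poly. degree f > 0 \<longrightarrow> (\<exists>x. poly f x = 0)" and x: "x \<noteq> (0::'k fls)"
  shows "fls_subdegree (iotaR (CHAR('k) ^ e) x) = fls_subdegree x"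
  by (rule fls_subdegree_eqI) (use x iotaR_nz_iff[OF pc alg] in auto)

lemma iotaR_nz:
  assumes pc: "prime CHAR('k::field)"
    and alg: "\<forall>f::'k poly. degree f > 0 \<longrightarrow> (\<exists>x. poly f x = 0)" and x: "x \<noteq> (0::'k fls)"
  shows "iotaR (CHAR('k) ^ e) x \<noteq> 0"
proof
  assume "iotaR (CHAR('k) ^ e) x = 0"
  then have "fls_nth (iotaR (CHAR('k) ^ e) x) (fls_subdegree x) = 0" by simp
  then show False using iotaR_nz_iff[OF pc alg] x by simp
qed

lemma embR_0 [simp]: "embR q R 0 = 0" by (simp add: embR_def)
lemma embR_1 [simp]: "embR q R 1 = 1" by (simp add: embR_def)


lemma cadm_c:
  fixes A :: "'a::zero fls mx"
  assumes Q: "Q > 0"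
  shows "cadm n (\<lambda>i j. - ereal Q * mu A i j)"
  unfolding cadm_def
proof (intro conjI ballI impI)
  fix i assume "i \<in> {1..n}"
  show "- ereal Q * mu A i i \<le> 0" by simp
next
  fix i l j assume "i \<in> {1..n}" "l \<in> {1..n}" "j \<in> {1..n}" and ilj: "i \<le> l \<and> l \<le> j"
  show "- ereal Q * mu A i j \<le> - ereal Q * mu A i l + - ereal Q * mu A l j"
    using ilj by (intro ereal_EL1 mu_not_inf mu_super Q) auto
qed

lemma sd_neg:
  fixes a :: "'a::zero fls"
  assumes "a \<noteq> 0" "\<forall>l::int. l \<ge> 0 \<longrightarrow> fls_nth a l = 0"
  shows "fls_subdegree a < 0"
proof (rule ccontr)
  assume "\<not> fls_subdegree a < 0"
  then have "fls_nth a (fls_subdegree a) = 0" using assms(2) by simp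
  then show False using assms(1) by simp
qed

lemma GdB:
  fixes A :: "'k::field fls mx"
  assumes pc: "prime CHAR('k)"
    and alg: "\<forall>f::'k poly. degree f > 0 \<longrightarrow> (\<exists>x. poly f x = 0)"
    and A_UT: "is_UT n A"
    and neg: "\<forall>a b. 1 \<le> a \<and> a < b \<and> b \<le> n \<longrightarrow> (\<forall>l::int. l \<ge> 0 \<longrightarrow> fls_nth (A a b) l = 0)"
    and e: "1 \<le> e" "e \<le> N"
  shows "Gd n CHAR('k) (\<lambda>i j. - ereal (real (CHAR('k) ^ N)) * mu A i j)
           (frobm (CHAR('k) ^ e) (\<lambda>i j. iotaR (CHAR('k) ^ N) (A i j)))"
  unfolding Gd_def
proof (intro ballI conjI impI)
  define p where "p = CHAR('k)"
  have p0: "p > 0" unfolding p_def using pc prime_gt_0_nat by blast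
  fix i j assume i: "i \<in> {1..n}" and j: "j \<in> {1..n}"
  have pe0: "CHAR('k) ^ e > 0" using p0 unfolding p_def by simp
  show "frobm (CHAR('k) ^ e) (\<lambda>i j. iotaR (CHAR('k) ^ N) (A i j)) i j = 0" if "j < i"
    using A_UT i j that pe0 unfolding is_UT_def frobm_def by (simp add: iotaR_0[OF pc])
  show "frobm (CHAR('k) ^ e) (\<lambda>i j. iotaR (CHAR('k) ^ N) (A i j)) i i = 1"
    using A_UT i unfolding is_UT_def frobm_def by (simp add: iotaR_1[OF pc])
  show "pz CHAR('k) (frobm (CHAR('k) ^ e) (\<lambda>i j. iotaR (CHAR('k) ^ N) (A i j)) i j)"
  proof (cases "i < j")
    case True
    let ?S = "{fls_subdegree (A i j)..<0}"
    have "\<forall>m. m \<notin> ?S \<longrightarrow> fls_nth (iotaR (CHAR('k) ^ N) (A i j)) m = 0"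
      using neg i j True by (auto simp: iotaR_nz_iff[OF pc alg] not_le)
    then show ?thesis unfolding frobm_def
      by (intro frob_fin_pz[OF pc, of ?S] e) auto
  next
    case False
    then show ?thesis using A_UT i j pe0 unfolding is_UT_def frobm_def
      by (cases "i = j") (auto simp: iotaR_0[OF pc] iotaR_1[OF pc] zero_power)
  qed
  show "lbz (frobm (CHAR('k) ^ e) (\<lambda>i j. iotaR (CHAR('k) ^ N) (A i j)) i j)
      (- ereal (real (CHAR('k) ^ N)) * mu A i j)"
  proof (cases "i < j")
    case True
    show ?thesis
    proof (cases "A i j = 0")
      case True
      then show ?thesis unfolding frobm_def using pe0 by (simp add: iotaR_0[OF pc] zero_power)
    next
      case False
      define a where "a = A i j"
      have anz: "a \<noteq> 0" using False a_def by simp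
      have sd: "fls_subdegree a < 0" unfolding a_def using anz neg i j \<open>i < j\<close> a_def
        by (intro sd_neg) auto
      have sdb: "fls_subdegree (iotaR (CHAR('k) ^ N) a ^ (CHAR('k) ^ e)) = int (CHAR('k) ^ e) * fls_subdegree a"
        by (simp add: fls_subdegree_pow iotaR_subdeg[OF pc alg anz])
      have mij: "mij A i j = - ereal (real_of_int (fls_subdegree a))"
        unfolding mij_def vfl_def a_def using anz a_def by simp
      have mle: "mij A i j \<le> mu A i j" using \<open>i < j\<close> by (rule mij_le_mu)
      obtain r where r: "mu A i j = ereal r" using mu_not_inf[of i j A] mle mij \<open>i < j\<close>
        by (cases "mu A i j") auto
      have rle: "- real_of_int (fls_subdegree a) \<le> r" using mle mij r by simp
      have "real (CHAR('k) ^ e) \<le> real (CHAR('k) ^ N)"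
      proof -
        have "CHAR('k) ^ e \<le> CHAR('k) ^ N" using e pc by (intro power_increasing) (use prime_ge_1_nat[of "CHAR('k)"] in auto)
        then show ?thesis by (simp only: of_nat_le_iff)
      qed
      then have "real (CHAR('k) ^ N) * real_of_int (fls_subdegree a) \<le> real (CHAR('k) ^ e) * real_of_int (fls_subdegree a)"
        using sd by (intro mult_right_mono_neg) auto
      moreover have "- real (CHAR('k) ^ N) * r \<le> real (CHAR('k) ^ N) * real_of_int (fls_subdegree a)"
      proof -
        have "real (CHAR('k) ^ N) * (- real_of_int (fls_subdegree a)) \<le> real (CHAR('k) ^ N) * r"
          by (rule mult_left_mono) (use rle in auto)
        then show ?thesis by simp
      qed
      ultimately have "- ereal (real (CHAR('k) ^ N)) * mu A i j \<le>
          ereal (real_of_int (fls_subdegree (iotaR (CHAR('k) ^ N) a ^ (CHAR('k) ^ e))))"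
        unfolding sdb r by simp
      then show ?thesis unfolding frobm_def lbz_iff a_def by simp
    qed
  next
    case False
    then show ?thesis using A_UT i j pe0 unfolding is_UT_def frobm_def
      by (cases "i = j") (auto simp: iotaR_0[OF pc] iotaR_1[OF pc] zero_power intro: lbz_1)
  qed
qed

lemma N_pos:
  fixes A :: "'a::zero fls mx" and p :: nat
  assumes p: "prime p"
    and N: "real N > log (real p) (real n * (real p ^ k + 1) * mA n A + real p) + real (n * (n - 1) div 2)"
    and ex: "1 \<le> a" "a < b" "b \<le> n" "A a b \<noteq> 0"
    and neg: "\<forall>a b. 1 \<le> a \<and> a < b \<and> b \<le> n \<longrightarrow> (\<forall>l::int. l \<ge> 0 \<longrightarrow> fls_nth (A a b) l = 0)"
  shows "N \<ge> 1"
proof -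
  define Set where "Set = {real_of_int (fls_subdegree (A i j)) / real (j - i) | i j.
                   1 \<le> i \<and> i < j \<and> j \<le> n \<and> A i j \<noteq> 0}"
  have fin: "finite Set"
  proof (rule finite_subset)
    show "Set \<subseteq> (\<lambda>(i,j). real_of_int (fls_subdegree (A i j)) / real (j - i)) ` ({1..n} \<times> {1..n})"
      unfolding Set_def by auto
  qed auto
  have ne: "Set \<noteq> {}" unfolding Set_def using ex by auto
  have neg': "\<forall>x\<in>Set. x < 0"
  proof
    fix x assume "x \<in> Set"
    then obtain i j where ij: "x = real_of_int (fls_subdegree (A i j)) / real (j - i)"
      "1 \<le> i" "i < j" "j \<le> n" "A i j \<noteq> 0" unfolding Set_def by auto
    have "fls_subdegree (A i j) < 0" using ij neg by (intro sd_neg) auto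
    then show "x < 0" using ij by (simp add: divide_neg_pos)
  qed
  have "Min Set < 0" using Min_in[OF fin ne] neg' by auto
  then have mA: "mA n A > 0" unfolding mA_def Set_def by simp
  have p1: "real p > 1" using p prime_gt_1_nat by auto
  have "real n * (real p ^ k + 1) * mA n A \<ge> 0" using mA by simp
  then have "real n * (real p ^ k + 1) * mA n A + real p \<ge> 1" using p1 by linarith
  then have "log (real p) (real n * (real p ^ k + 1) * mA n A + real p) \<ge> 0"
    using p1 by (subst zero_le_log_cancel_iff) auto
  then have "real N > 0" using N by (smt (verit) of_nat_0_le_iff)
  then show ?thesis by simp
qed


lemma mmul_diff:
  fixes P E C V :: "'a::comm_ring_1 mx"
  shows "mmul n P (mmul n E V) i j - mmul n P (mmul n C V) i j =
    (\<Sum>k\<in>{1..n}. \<Sum>l\<in>{1..n}. P i k * (E k l - C k l) * V l j)"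
  unfolding mmul_def
  by (simp add: sum_subtractf[symmetric] sum_distrib_left algebra_simps)

lemma frobm_frobm: "frobm p (frobm (p ^ e) X) = frobm (p ^ Suc e) (X :: 'a::monoid_mult mx)"
  unfolding frobm_def by (simp add: power_mult[symmetric] mult.commute)

lemma Gd_frob_idm:
  assumes "p > 0"
  shows "Gd n p' (\<lambda>i j. - ereal Q * mu A i j) (frobm p (idm :: 'k::field fls mx))"
  unfolding Gd_def frobm_def idm_def using assms
  by (auto simp: zero_power intro: lbz_1)


theorem lemma21:
  fixes p n N R i j :: nat and A :: "'k::field fls mx"
    and phi :: "'k fls \<Rightarrow> 'l::field" and Theta :: "'l mx"
  assumes p: "prime p" and chark: "of_nat p = (0::'k)"
    and algclosed: "\<forall>f::'k poly. degree f > 0 \<longrightarrow> (\<exists>x. poly f x = 0)"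
    and n: "n \<ge> 2"
    and A_UT: "is_UT n A"
    and A_coef: "\<forall>a b. 1 \<le> a \<and> a < b \<and> b \<le> n \<longrightarrow>
                   (\<forall>l::int. (int p dvd l \<or> l \<ge> 0) \<longrightarrow> fls_nth (A a b) l = 0)"
    and phi_hom: "is_field_hom phi"
    and L_gal: "galois_UT n p phi"
    and Theta_UT: "is_UT n Theta"
    and Theta_eq: "\<forall>a\<in>{1..n}. \<forall>b\<in>{1..n}.
                     mmul n (frobm p Theta) (\<lambda>c d. phi (A c d)) a b = Theta a b"
    and Theta_gen: "\<forall>F. is_subfield F \<and> range phi \<subseteq> F \<and>
                     (\<forall>a\<in>{1..n}. \<forall>b\<in>{1..n}. Theta a b \<in> F) \<longrightarrow> F = UNIV"
    and N: "real N > log (real p) (real n * (real p ^ (n * (n - 1) div 2) + 1) * mA n A + real p)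
                      + real (n * (n - 1) div 2)"
    and R: "R > 0" "coprime R p"
    and ij: "1 \<le> i" "i < j" "j \<le> n"
    and hyp: "vfl (SR p n N R (p ^ N) A i j) < - ereal (real (p ^ N)) * mu A i j + ereal (real (p * R))"
  shows "\<not> (int p dvd fls_subdegree (SR p n N R (p ^ N) A i j))"
proof -
  have pc: "CHAR('k) = p" by (rule CHAR_eq_p[OF p chark])
  have pcp: "prime CHAR('k)" using pc p by simp
  have p0: "p > 0" using p prime_gt_0_nat by blast
  have neg: "\<forall>a b. 1 \<le> a \<and> a < b \<and> b \<le> n \<longrightarrow> (\<forall>l::int. l \<ge> 0 \<longrightarrow> fls_nth (A a b) l = 0)"
    using A_coef by blast
  have npR: "\<not> p dvd R"
  proof
    assume "p dvd R"
    then have "p dvd gcd R p" by simp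
    then show False using R(2) p by (simp add: coprime_iff_gcd_eq_1)
  qed
  have Rk: "of_nat R \<noteq> (0::'k)" using npR pc by (simp add: of_nat_eq_0_iff_char_dvd)
  have pR: "\<forall>k. CHAR('k) dvd R * k \<longrightarrow> CHAR('k) dvd k"
    using npR p pc by (auto simp: prime_dvd_mult_iff)
  define q where "q = p ^ N"
  have q0: "q > 0" unfolding q_def using p0 by simp
  define B where "B = (\<lambda>i j. iotaR q (A i j))"
  define c where "c = (\<lambda>i j. - ereal (real q) * mu A i j)"
  have cadm: "cadm n c" unfolding c_def by (rule cadm_c) (use q0 in simp)
  define W where "W = WR p n q A"
  have WS: "W (Suc e) = mmul n (frobm (p ^ e) B) (W e)" for e
    unfolding W_def WR_def B_def by simp
  have fW: "frobm p (W (Suc e)) = mmul n (frobm (p ^ Suc e) B) (frobm p (W e))" for e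
  proof -
    have "frobm p (W (Suc e)) = frobm (CHAR('k) ^ 1) (mmul n (frobm (p ^ e) B) (W e))"
      using WS pc by simp
    also have "\<dots> = mmul n (frobm p (frobm (p ^ e) B)) (frobm p (W e))"
      using frobm_mmul[OF pcp, of 1 n] pc by simp
    finally show ?thesis by (simp add: frobm_frobm)
  qed
  have GdB': "Gd n p c (frobm (p ^ e) B)" if "1 \<le> e" "e \<le> N" for e
    using GdB[OF pcp algclosed A_UT neg that] unfolding pc B_def c_def q_def .
  have GdV: "Gd n p c (frobm p (W e))" if "e \<le> N - 1" for e
    using that
  proof (induction e)
    case 0
    have "W 0 = idm" unfolding W_def WR_def by simp
    then show ?case unfolding c_def using Gd_frob_idm[OF p0] by simp
  next
    case (Suc e)
    then show ?case unfolding fW by (intro Gd_mmul[OF cadm] GdB') auto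
  qed
  define V where "V = frobm p (W (N - 1))"
  define M where "M = frobm p (W N)"
  define C where "C = (if N = 0 then idm else frobm q B)"
  have MCV: "eqn n M (mmul n C V)"
  proof (cases "N = 0")
    case True
    then show ?thesis unfolding eqn_def M_def C_def V_def by (simp add: mmul_idm_left)
  next
    case False
    then have "M = mmul n C V" unfolding M_def C_def V_def q_def
      using fW[of "N - 1"] by simp
    then show ?thesis unfolding eqn_def by simp
  qed
  have GdV': "Gd n p c V" unfolding V_def by (rule GdV) simp
  have GdM: "Gd n p c M"
  proof (cases "N = 0")
    case True
    then show ?thesis using GdV' unfolding M_def V_def by simp
  next
    case False
    then have "M = mmul n (frobm (p ^ N) B) V" unfolding M_def V_def using fW[of "N - 1"] by simp
    then show ?thesis using False by (simp add: Gd_mmul[OF cadm GdB' GdV'])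
  qed
  have utM: "ut n M" by (rule Gd_ut[OF GdM])
  define P where "P = minv n M"
  have P: "P = rinv n M" unfolding P_def by (rule minv_rinv[OF utM])
  have GdP: "Gd n p c P" unfolding P by (rule Gd_rinv[OF cadm GdM])
  define E where "E = (\<lambda>i j. embR q R (A i j))"
  define S where "S = SR p n N R (p ^ N) A i j"
  have ijr: "i \<in> {1..n}" "j \<in> {1..n}" using ij by auto
  have Seq: "S = (\<Sum>k\<in>{1..n}. \<Sum>l\<in>{1..n}. P i k * (E k l - C k l) * V l j)"
  proof -
    have "S = mmul n P (mmul n E V) i j - idm i j"
      unfolding S_def SR_def msub_def P_def M_def V_def W_def E_def q_def by simp
    also have "idm i j = mmul n P M i j" unfolding P using rinv_left[OF utM ijr] by simp
    also have "\<dots> = mmul n P (mmul n C V) i j"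
      by (rule mmul_cong[OF _ MCV ijr]) (simp add: eqn_def)
    finally show ?thesis by (simp add: mmul_diff)
  qed
  define beta where "beta = - ereal (real (p ^ N)) * mu A i j + ereal (real (p * R))"
  have Dz: "E k l - C k l = 0" if "k \<in> {1..n}" "l \<in> {1..n}" "\<not> (k < l \<and> A k l \<noteq> 0)" for k l
  proof -
    have Cq: "C k l = (if N = 0 then idm k l else (iotaR (CHAR('k) ^ N) (A k l)) ^ (CHAR('k) ^ N))"
      unfolding C_def frobm_def B_def q_def pc by simp
    show ?thesis
    proof (cases "k = l")
      case True
      then have "A k l = 1" using A_UT that unfolding is_UT_def by auto
      then show ?thesis unfolding E_def using Cq True by (simp add: iotaR_1[OF pcp] idm_def)
    next
      case False
      then have "A k l = 0" using A_UT that unfolding is_UT_def by (cases "k < l") auto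
      then show ?thesis unfolding E_def using Cq False q0 prime_gt_0_nat[OF pcp] by (simp add: iotaR_0[OF pcp] idm_def zero_power q_def)
    qed
  qed
  have trm: "gz p (P i k * (E k l - C k l) * V l j) beta" if kl: "k \<in> {1..n}" "l \<in> {1..n}" for k l
  proof (cases "P i k = 0 \<or> V l j = 0 \<or> E k l - C k l = 0")
    case True then show ?thesis by auto
  next
    case False
    then have Pnz: "P i k \<noteq> 0" and Vnz: "V l j \<noteq> 0" and Dnz: "E k l - C k l \<noteq> 0" by auto
    have ik: "i \<le> k" using GdP Pnz ijr kl unfolding Gd_def by (meson linorder_not_le)
    have lj: "l \<le> j" using GdV' Vnz ijr kl unfolding Gd_def by (meson linorder_not_le)
    have klA: "k < l" "A k l \<noteq> 0" using Dz[OF kl] Dnz by auto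
    have N1: "N \<ge> 1"
      using N_pos[OF p N _ klA(1) _ klA(2) neg] kl by auto
    define a where "a = A k l"
    have anz: "a \<noteq> 0" using klA a_def by simp
    have negA: "\<forall>l'::int. l' \<ge> 0 \<longrightarrow> fls_nth a l' = 0" using neg kl klA unfolding a_def by auto
    have Deq: "E k l - C k l = embR (CHAR('k) ^ N) R a - iotaR (CHAR('k) ^ N) a ^ (CHAR('k) ^ N)"
      unfolding E_def C_def B_def frobm_def a_def q_def pc using N1 by simp
    have gD: "gz p (E k l - C k l) (ereal (real_of_int (int q * fls_subdegree a)) + ereal (real (p * R)))"
      using D_gz[OF pcp algclosed Rk N1 pR negA] unfolding Deq pc q_def .
    have pzP: "pz p (P i k)" and pzV: "pz p (V l j)" using GdP GdV' ijr kl unfolding Gd_def by auto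
    have g2: "gz p (V l j * (P i k * (E k l - C k l)))
        (ereal (real_of_int (fls_subdegree (V l j))) + (ereal (real_of_int (fls_subdegree (P i k))) +
          (ereal (real_of_int (int q * fls_subdegree a)) + ereal (real (p * R)))))"
      by (intro gz_mult pzV pzP gD)
    have lP: "c i k \<le> ereal (real_of_int (fls_subdegree (P i k)))"
    proof -
      have "lbz (P i k) (c i k)" using GdP ijr kl unfolding Gd_def by blast
      then show ?thesis using Pnz unfolding lbz_iff by blast
    qed
    have lV: "c l j \<le> ereal (real_of_int (fls_subdegree (V l j)))"
    proof -
      have "lbz (V l j) (c l j)" using GdV' ijr kl unfolding Gd_def by blast
      then show ?thesis using Vnz unfolding lbz_iff by blast
    qed
    have mij: "mij A k l = - ereal (real_of_int (fls_subdegree a))"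
      unfolding mij_def vfl_def a_def using anz a_def by simp
    have musum: "mu A i k + - ereal (real_of_int (fls_subdegree a)) + mu A l j \<le> mu A i j"
    proof -
      have "mu A i k + mij A k l + mu A l j \<le> mu A i k + mu A k l + mu A l j"
        using mij_le_mu[OF klA(1), of A] by (intro add_mono) auto
      also have "\<dots> \<le> mu A i l + mu A l j"
        using mu_super[of i k l A] ik klA(1) by (intro add_mono) auto
      also have "\<dots> \<le> mu A i j" using mu_super[of i l j A] ik klA(1) lj by simp
      finally show ?thesis unfolding mij .
    qed
    have "beta \<le> ereal (real_of_int (fls_subdegree (V l j))) + (ereal (real_of_int (fls_subdegree (P i k))) +
          (ereal (real_of_int (int q * fls_subdegree a)) + ereal (real (p * R))))"
    proof -
      have "- ereal (real q) * mu A i j + ereal (real (p * R)) \<le>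
        ereal (real_of_int (fls_subdegree (V l j))) + (ereal (real_of_int (fls_subdegree (P i k))) +
          (ereal (real q * real_of_int (fls_subdegree a)) + ereal (real (p * R))))"
        by (rule ereal_EL2[OF mu_not_inf mu_not_inf mu_not_inf _ lP[unfolded c_def] lV[unfolded c_def] musum])
           (use ik klA lj q0 in auto)
      then show ?thesis unfolding beta_def q_def by simp
    qed
    then have "gz p (V l j * (P i k * (E k l - C k l))) beta" using g2 by (elim gz_mono)
    then show ?thesis by (simp add: ac_simps)
  qed
  have gS: "gz p S beta" unfolding Seq by (intro gz_sum trm) auto
  have Snz: "S \<noteq> 0" using hyp unfolding S_def vfl_def by auto
  have lt: "ereal (real_of_int (fls_subdegree S)) < beta"
    using hyp Snz unfolding S_def[symmetric] beta_def vfl_def by simp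
  show ?thesis
  proof
    assume "int p dvd fls_subdegree (SR p n N R (p ^ N) A i j)"
    then have "int p dvd fls_subdegree S" unfolding S_def .
    then have "fls_nth S (fls_subdegree S) = 0" using gS lt unfolding gz_def by blast
    then show False using Snz by simp
  qed
qed


end
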